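(* Let $G$ be a bipartite twisted net with $n$ vertices. Then each color class of $G$ contains exactly two corners, say $u_1,u_2$ in one class and $v_1,v_2$ in the other; the graph $G\setminus\{u_1,u_2,v_1,v_2\}$ has a perfect matching (the empty graph counting as having one), and for all $i,j\in\{1,2\}$ the graph $G\setminus\{u_i,v_j\}$ has a perfect matching. Moreover, for some $i,j\in\{1,2\}$, the graph $G\setminus\{u_i,v_j\}$ has at least $2^{n/18-2/9}$ perfect matchings.
   Context: In a graph with all degrees $2$ or $3$, the degree-two vertices are corners; for a graph consisting of a single edge, both its ends are corners. Twisted nets are defined inductively: a $4$-cycle is a twisted net; if $T$ is a twisted net and $H$ is (disjoint from $T$) either a twisted net or a single edge, then the graph obtained from $T\cup H$ by adding edges $uv$ and $u'v'$, where $u\neq u'$ are corners of $T$ and $v\ne v'$ are corners of $H$, is a twisted net. Every twisted net has exactly four corners. $G\setminus S$ denotes deletion of the vertex set $S$. *)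

theory Defs
  imports Complex_Main
begin

text \<open>A (simple) graph is given by a vertex set V and an edge set E of 2-element subsets.\<close>

definition degree :: "'a set set \<Rightarrow> 'a \<Rightarrow> nat" where
  "degree E v = card {e \<in> E. v \<in> e}"

definition corners :: "'a set \<Rightarrow> 'a set set \<Rightarrow> 'a set" where
  "corners V E = {v \<in> V. degree E v = 2}"

inductive twisted_net :: "'a set \<Rightarrow> 'a set set \<Rightarrow> bool" where
  cycle4: "\<lbrakk> distinct [a, b, c, d] \<rbrakk> \<Longrightarrow>
     twisted_net {a, b, c, d} {{a, b}, {b, c}, {c, d}, {d, a}}"
| join_net: "\<lbrakk> twisted_net V1 E1; twisted_net V2 E2; V1 \<inter> V2 = {};
     u \<in> corners V1 E1; u' \<in> corners V1 E1; u \<noteq> u';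
     v \<in> corners V2 E2; v' \<in> corners V2 E2; v \<noteq> v' \<rbrakk> \<Longrightarrow>
     twisted_net (V1 \<union> V2) (E1 \<union> E2 \<union> {{u, v}, {u', v'}})"
| join_edge: "\<lbrakk> twisted_net V1 E1; a \<noteq> b; a \<notin> V1; b \<notin> V1;
     u \<in> corners V1 E1; u' \<in> corners V1 E1; u \<noteq> u' \<rbrakk> \<Longrightarrow>
     twisted_net (V1 \<union> {a, b}) (E1 \<union> {{a, b}} \<union> {{u, a}, {u', b}})"

definition del_verts_V :: "'a set \<Rightarrow> 'a set \<Rightarrow> 'a set" where
  "del_verts_V V S = V - S"
definition del_verts_E :: "'a set set \<Rightarrow> 'a set \<Rightarrow> 'a set set" where
  "del_verts_E E S = {e \<in> E. e \<inter> S = {}}"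

definition perfect_matching :: "'a set \<Rightarrow> 'a set set \<Rightarrow> 'a set set \<Rightarrow> bool" where
  "perfect_matching V E M \<longleftrightarrow> M \<subseteq> E \<and> (\<forall>v\<in>V. \<exists>!e. e \<in> M \<and> v \<in> e)"

definition perfect_matchings :: "'a set \<Rightarrow> 'a set set \<Rightarrow> 'a set set set" where
  "perfect_matchings V E = {M. perfect_matching V E M}"

definition bipartition :: "'a set \<Rightarrow> 'a set set \<Rightarrow> 'a set \<Rightarrow> 'a set \<Rightarrow> bool" where
  "bipartition V E A B \<longleftrightarrow> A \<union> B = V \<and> A \<inter> B = {} \<and>
     (\<forall>e\<in>E. card (e \<inter> A) = 1 \<and> card (e \<inter> B) = 1)"

definition bipartite :: "'a set \<Rightarrow> 'a set set \<Rightarrow> bool" where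
  "bipartite V E \<longleftrightarrow> (\<exists>A B. bipartition V E A B)"

end

theory Submission
  imports Defs
begin


definition pm :: "'a set set \<Rightarrow> 'a set \<Rightarrow> 'a set set set" where
  "pm E X = {M. M \<subseteq> {e\<in>E. e \<subseteq> X} \<and> (\<forall>x\<in>X. \<exists>!e. e\<in>M \<and> x\<in>e)}"

definition cnt :: "'a set set \<Rightarrow> 'a set \<Rightarrow> nat" where
  "cnt E X = card (pm E X)"

lemma pm_conv:
  assumes "\<forall>e\<in>E. e \<subseteq> V"
  shows "perfect_matchings (del_verts_V V S) (del_verts_E E S) = pm E (V - S)"
proof -
  have "{e\<in>E. e \<inter> S = {}} = {e\<in>E. e \<subseteq> V - S}" using assms by blast
  then show ?thesis unfolding perfect_matchings_def perfect_matching_def pm_def del_verts_V_def del_verts_E_def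
    by simp
qed

lemma split_class:
  assumes V12: "V1 \<inter> V2 = {}" and E1: "\<forall>e\<in>E1. e \<subseteq> V1 \<and> e \<noteq> {}"
    and E2: "\<forall>e\<in>E2. e \<subseteq> V2 \<and> e \<noteq> {}"
    and C: "\<forall>c\<in>C. c \<subseteq> V1 \<union> V2 \<and> \<not> c \<subseteq> V1 \<and> \<not> c \<subseteq> V2"
    and F: "F \<subseteq> C" "\<forall>f\<in>F. \<forall>g\<in>F. f \<noteq> g \<longrightarrow> f \<inter> g = {}" "\<Union>F \<subseteq> X"
    and X: "X \<subseteq> V1 \<union> V2"
  shows "card {M \<in> pm (E1 \<union> E2 \<union> C) X. M \<inter> C = F}
     = cnt E1 (X \<inter> V1 - \<Union>F) * cnt E2 (X \<inter> V2 - \<Union>F)"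
proof -
  define Y1 where "Y1 = X \<inter> V1 - \<Union>F"
  define Y2 where "Y2 = X \<inter> V2 - \<Union>F"
  define S where "S = {M \<in> pm (E1 \<union> E2 \<union> C) X. M \<inter> C = F}"
  have E1C: "E1 \<inter> C = {}" using E1 C by (metis Int_emptyI subsetD)
  have E2C: "E2 \<inter> C = {}" using E2 C by (metis Int_emptyI)
  have E12: "E1 \<inter> E2 = {}" proof -
    { fix e assume "e\<in>E1" "e\<in>E2" hence "e \<subseteq> V1 \<inter> V2" "e \<noteq> {}" using E1 E2 by auto
      hence False using V12 by auto }
    thus ?thesis by blast
  qed
  have "bij_betw (\<lambda>(N1,N2). N1 \<union> N2 \<union> F) (pm E1 Y1 \<times> pm E2 Y2) S"
  proof (rule bij_betw_byWitness[where f' = "\<lambda>M. (M \<inter> E1, M \<inter> E2)"])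
    show "\<forall>a\<in>pm E1 Y1 \<times> pm E2 Y2. (\<lambda>M. (M \<inter> E1, M \<inter> E2)) ((\<lambda>(N1,N2). N1 \<union> N2 \<union> F) a) = a"
    proof
      fix a assume a: "a \<in> pm E1 Y1 \<times> pm E2 Y2"
      obtain N1 N2 where aa: "a = (N1,N2)" by (cases a)
      have "N1 \<subseteq> E1" "N2 \<subseteq> E2" using a aa unfolding pm_def by auto
      moreover have "F \<inter> E1 = {}" "F \<inter> E2 = {}" using F(1) E1C E2C by auto
      ultimately show "(\<lambda>M. (M \<inter> E1, M \<inter> E2)) ((\<lambda>(N1,N2). N1 \<union> N2 \<union> F) a) = a"
        using aa E12 by auto
    qed
    show "\<forall>a'\<in>S. (\<lambda>(N1,N2). N1 \<union> N2 \<union> F) ((\<lambda>M. (M \<inter> E1, M \<inter> E2)) a') = a'"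
    proof
      fix M assume "M \<in> S"
      hence "M \<subseteq> E1 \<union> E2 \<union> C" "M \<inter> C = F" unfolding S_def pm_def by auto
      thus "(\<lambda>(N1,N2). N1 \<union> N2 \<union> F) ((\<lambda>M. (M \<inter> E1, M \<inter> E2)) M) = M" by auto
    qed
    show "(\<lambda>(N1, N2). N1 \<union> N2 \<union> F) ` (pm E1 Y1 \<times> pm E2 Y2) \<subseteq> S"
    proof
      fix M assume "M \<in> (\<lambda>(N1, N2). N1 \<union> N2 \<union> F) ` (pm E1 Y1 \<times> pm E2 Y2)"
      then obtain N1 N2 where N: "N1 \<in> pm E1 Y1" "N2 \<in> pm E2 Y2" and M: "M = N1 \<union> N2 \<union> F" by auto
      have N1s: "N1 \<subseteq> {e\<in>E1. e \<subseteq> Y1}" and N1u: "\<forall>x\<in>Y1. \<exists>!e. e\<in>N1 \<and> x\<in>e"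
        using N(1) unfolding pm_def by auto
      have N2s: "N2 \<subseteq> {e\<in>E2. e \<subseteq> Y2}" and N2u: "\<forall>x\<in>Y2. \<exists>!e. e\<in>N2 \<and> x\<in>e"
        using N(2) unfolding pm_def by auto
      have sub: "M \<subseteq> {e\<in>E1 \<union> E2 \<union> C. e \<subseteq> X}"
        using N1s N2s F M unfolding Y1_def Y2_def by auto
      have cov: "\<forall>x\<in>X. \<exists>!e. e\<in>M \<and> x\<in>e"
      proof
        fix x assume xX: "x \<in> X"
        show "\<exists>!e. e\<in>M \<and> x\<in>e"
        proof (cases "x \<in> \<Union>F")
          case True
          then obtain f where f: "f \<in> F" "x \<in> f" by auto
          show ?thesis
          proof (rule ex1I[of _ f])
            show "f \<in> M \<and> x \<in> f" using f M by auto
            fix e assume e: "e \<in> M \<and> x \<in> e"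
            have "e \<notin> N1" using N1s True e unfolding Y1_def by auto
            moreover have "e \<notin> N2" using N2s True e unfolding Y2_def by auto
            ultimately have "e \<in> F" using e M by auto
            thus "e = f" using F(2) f e by blast
          qed
        next
          case False
          show ?thesis
          proof (cases "x \<in> V1")
            case True
            hence xY: "x \<in> Y1" using xX False unfolding Y1_def by auto
            then obtain f where f: "f \<in> N1" "x \<in> f" using N1u by blast
            show ?thesis
            proof (rule ex1I[of _ f])
              show "f \<in> M \<and> x \<in> f" using f M by auto
              fix e assume e: "e \<in> M \<and> x \<in> e"
              have "e \<notin> F" using False e by auto
              moreover have "e \<notin> N2" using N2s True e V12 unfolding Y2_def by auto
              ultimately have "e \<in> N1" using e M by auto
              thus "e = f" using N1u xY f e by blast
            qed
          next
            case xV1: False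
            hence xY: "x \<in> Y2" using xX False X unfolding Y2_def by auto
            then obtain f where f: "f \<in> N2" "x \<in> f" using N2u by blast
            show ?thesis
            proof (rule ex1I[of _ f])
              show "f \<in> M \<and> x \<in> f" using f M by auto
              fix e assume e: "e \<in> M \<and> x \<in> e"
              have "e \<notin> F" using False e by auto
              moreover have "e \<notin> N1" using N1s xV1 e unfolding Y1_def by auto
              ultimately have "e \<in> N2" using e M by auto
              thus "e = f" using N2u xY f e by blast
            qed
          qed
        qed
      qed
      have "M \<inter> C = F" using M N1s N2s F(1) E1C E2C by auto
      thus "M \<in> S" using sub cov unfolding S_def pm_def by auto
    qed
    show "(\<lambda>M. (M \<inter> E1, M \<inter> E2)) ` S \<subseteq> pm E1 Y1 \<times> pm E2 Y2"
    proof
      fix P assume "P \<in> (\<lambda>M. (M \<inter> E1, M \<inter> E2)) ` S"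
      then obtain M where MS: "M \<in> S" and P: "P = (M \<inter> E1, M \<inter> E2)" by auto
      have Ms: "M \<subseteq> {e\<in>E1 \<union> E2 \<union> C. e \<subseteq> X}" and Mu: "\<forall>x\<in>X. \<exists>!e. e\<in>M \<and> x\<in>e"
        and MC: "M \<inter> C = F" using MS unfolding S_def pm_def by auto
      have disjF: "e \<inter> \<Union>F = {}" if "e \<in> M" "e \<notin> C" for e
      proof (rule ccontr)
        assume "e \<inter> \<Union>F \<noteq> {}"
        then obtain x f where "x \<in> e" "f \<in> F" "x \<in> f" by auto
        moreover have "x \<in> X" using \<open>x\<in>e\<close> Ms that by auto
        moreover have "f \<in> M" using \<open>f\<in>F\<close> MC by auto
        moreover have "e \<noteq> f" using that \<open>f\<in>F\<close> F(1) by auto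
        ultimately show False using Mu that by blast
      qed
      have p1: "M \<inter> E1 \<in> pm E1 Y1"
        unfolding pm_def
      proof (intro CollectI conjI)
        show "M \<inter> E1 \<subseteq> {e \<in> E1. e \<subseteq> Y1}"
        proof
          fix e assume e: "e \<in> M \<inter> E1"
          hence "e \<notin> C" using E1C by auto
          hence "e \<inter> \<Union>F = {}" using disjF e by auto
          thus "e \<in> {e \<in> E1. e \<subseteq> Y1}" using e Ms E1 unfolding Y1_def by auto
        qed
        show "\<forall>x\<in>Y1. \<exists>!e. e \<in> M \<inter> E1 \<and> x \<in> e"
        proof
          fix x assume xY: "x \<in> Y1"
          then obtain e where e: "e \<in> M" "x \<in> e" using Mu unfolding Y1_def by blast
          have "e \<notin> C" using e xY MC unfolding Y1_def by auto
          moreover have "e \<notin> E2" using e xY E2 V12 unfolding Y1_def by auto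
          ultimately have "e \<in> E1" using e Ms by auto
          thus "\<exists>!e. e \<in> M \<inter> E1 \<and> x \<in> e" using e Mu xY unfolding Y1_def by blast
        qed
      qed
      have p2: "M \<inter> E2 \<in> pm E2 Y2"
        unfolding pm_def
      proof (intro CollectI conjI)
        show "M \<inter> E2 \<subseteq> {e \<in> E2. e \<subseteq> Y2}"
        proof
          fix e assume e: "e \<in> M \<inter> E2"
          hence "e \<notin> C" using E2C by auto
          hence "e \<inter> \<Union>F = {}" using disjF e by auto
          thus "e \<in> {e \<in> E2. e \<subseteq> Y2}" using e Ms E2 unfolding Y2_def by auto
        qed
        show "\<forall>x\<in>Y2. \<exists>!e. e \<in> M \<inter> E2 \<and> x \<in> e"
        proof
          fix x assume xY: "x \<in> Y2"
          then obtain e where e: "e \<in> M" "x \<in> e" using Mu unfolding Y2_def by blast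
          have "e \<notin> C" using e xY MC unfolding Y2_def by auto
          moreover have "e \<notin> E1" using e xY E1 V12 unfolding Y2_def by auto
          ultimately have "e \<in> E2" using e Ms by auto
          thus "\<exists>!e. e \<in> M \<inter> E2 \<and> x \<in> e" using e Mu xY unfolding Y2_def by blast
        qed
      qed
      show "P \<in> pm E1 Y1 \<times> pm E2 Y2" using p1 p2 P by auto
    qed
  qed
  hence "card S = card (pm E1 Y1 \<times> pm E2 Y2)" by (rule bij_betw_same_card[symmetric])
  thus ?thesis unfolding S_def Y1_def Y2_def cnt_def by (simp add: card_cartesian_product)
qed
lemma pm_finite: "finite E \<Longrightarrow> finite (pm E X)"
  unfolding pm_def by (rule finite_subset[of _ "Pow E"]) auto

lemma class_empty:
  assumes "\<not> \<Union>F \<subseteq> X"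
  shows "{M \<in> pm E X. M \<inter> C = F} = {}"
  using assms unfolding pm_def by blast

lemma cnt_join:
  assumes V12: "V1 \<inter> V2 = {}" and E1: "\<forall>e\<in>E1. e \<subseteq> V1 \<and> e \<noteq> {}"
    and E2: "\<forall>e\<in>E2. e \<subseteq> V2 \<and> e \<noteq> {}"
    and uv: "u \<in> V1" "u' \<in> V1" "u \<noteq> u'" "v \<in> V2" "v' \<in> V2" "v \<noteq> v'"
    and X: "X \<subseteq> V1 \<union> V2" and fin: "finite E1" "finite E2"
  shows "cnt (E1 \<union> E2 \<union> {{u,v},{u',v'}}) X = cnt E1 (X\<inter>V1) * cnt E2 (X\<inter>V2)
    + (if u\<in>X \<and> v\<in>X then cnt E1 (X\<inter>V1 - {u}) * cnt E2 (X\<inter>V2 - {v}) else 0)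
    + (if u'\<in>X \<and> v'\<in>X then cnt E1 (X\<inter>V1 - {u'}) * cnt E2 (X\<inter>V2 - {v'}) else 0)
    + (if u\<in>X \<and> v\<in>X \<and> u'\<in>X \<and> v'\<in>X then cnt E1 (X\<inter>V1 - {u,u'}) * cnt E2 (X\<inter>V2 - {v,v'}) else 0)"
proof -
  define C where "C = {{u,v},{u',v'}}"
  define E where "E = E1 \<union> E2 \<union> C"
  define S where "S F = {M \<in> pm E X. M \<inter> C = F}" for F
  have uv1: "u \<notin> V2" "u' \<notin> V2" "v \<notin> V1" "v' \<notin> V1" using uv V12 by auto
  have ne: "{u,v} \<noteq> {u',v'}"
  proof
    assume "{u,v} = {u',v'}"
    moreover have "u \<notin> {u',v'}" using uv uv1 by auto
    ultimately show False by auto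
  qed
  have Cc: "\<forall>c\<in>C. c \<subseteq> V1 \<union> V2 \<and> \<not> c \<subseteq> V1 \<and> \<not> c \<subseteq> V2"
    unfolding C_def using uv uv1 by auto
  have dis: "{u,v} \<inter> {u',v'} = {}" using uv uv1 by auto
  have finE: "finite E" unfolding E_def C_def using fin by auto
  have fP: "finite (pm E X)" using pm_finite[OF finE] .
  have part: "pm E X = ((S {} \<union> S {{u,v}}) \<union> S {{u',v'}}) \<union> S {{u,v},{u',v'}}"
  proof -
    { fix M assume "M \<in> pm E X"
      have "M \<inter> C \<subseteq> C" by auto
      hence "M \<inter> C = {} \<or> M \<inter> C = {{u,v}} \<or> M \<inter> C = {{u',v'}} \<or> M \<inter> C = {{u,v},{u',v'}}"
        unfolding C_def by blast }
    thus ?thesis unfolding S_def by blast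
  qed
  have fS: "finite (S F)" for F using fP unfolding S_def by auto
  have cardP: "card (pm E X) = card (S {}) + card (S {{u,v}}) + card (S {{u',v'}}) + card (S {{u,v},{u',v'}})"
  proof -
    have gen: "S F \<inter> S G = {}" if "F \<noteq> G" for F G using that unfolding S_def by blast
    have n2: "{{u,v}} \<noteq> {{u',v'}}" "{{u,v}} \<noteq> {{u,v},{u',v'}}" "{{u',v'}} \<noteq> {{u,v},{u',v'}}"
      using ne by auto
    have d1: "S {} \<inter> S {{u,v}} = {}" by (rule gen) simp
    have d2: "(S {} \<union> S {{u,v}}) \<inter> S {{u',v'}} = {}"
      using gen[of "{}" "{{u',v'}}"] gen[OF n2(1)] by auto
    have d3: "((S {} \<union> S {{u,v}}) \<union> S {{u',v'}}) \<inter> S {{u,v},{u',v'}} = {}"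
      using gen[of "{}" "{{u,v},{u',v'}}"] gen[OF n2(2)] gen[OF n2(3)] by auto
    show ?thesis unfolding part
      by (simp add: card_Un_disjoint[OF _ _ d3] card_Un_disjoint[OF _ _ d2] card_Un_disjoint[OF _ _ d1] fS)
  qed
  have key: "card (S F) = cnt E1 (X \<inter> V1 - \<Union>F) * cnt E2 (X \<inter> V2 - \<Union>F)"
    if "F \<subseteq> C" "\<forall>f\<in>F. \<forall>g\<in>F. f \<noteq> g \<longrightarrow> f \<inter> g = {}" "\<Union>F \<subseteq> X" for F
    unfolding S_def E_def by (rule split_class[OF V12 E1 E2 Cc that X])
  have pd: "\<forall>f\<in>F. \<forall>g\<in>F. f \<noteq> g \<longrightarrow> f \<inter> g = {}" if "F \<subseteq> C" for F
    using that dis unfolding C_def by blast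
  have s0: "card (S {}) = cnt E1 (X\<inter>V1) * cnt E2 (X\<inter>V2)"
    using key[of "{}"] by simp
  have s1: "card (S {{u,v}}) = (if u\<in>X \<and> v\<in>X then cnt E1 (X\<inter>V1 - {u}) * cnt E2 (X\<inter>V2 - {v}) else 0)"
  proof (cases "u\<in>X \<and> v\<in>X")
    case True
    have "X \<inter> V1 - \<Union>{{u,v}} = X\<inter>V1 - {u}" "X \<inter> V2 - \<Union>{{u,v}} = X\<inter>V2 - {v}" using uv1 by auto
    thus ?thesis using True key[of "{{u,v}}"] pd[of "{{u,v}}"] unfolding C_def by simp
  next
    case False
    hence "\<not> \<Union>{{u,v}} \<subseteq> X" by auto
    hence "S {{u,v}} = {}" unfolding S_def by (rule class_empty)
    thus ?thesis by (simp only: if_not_P[OF False] card.empty)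
  qed
  have s2: "card (S {{u',v'}}) = (if u'\<in>X \<and> v'\<in>X then cnt E1 (X\<inter>V1 - {u'}) * cnt E2 (X\<inter>V2 - {v'}) else 0)"
  proof (cases "u'\<in>X \<and> v'\<in>X")
    case True
    have "X \<inter> V1 - \<Union>{{u',v'}} = X\<inter>V1 - {u'}" "X \<inter> V2 - \<Union>{{u',v'}} = X\<inter>V2 - {v'}" using uv1 by auto
    thus ?thesis using True key[of "{{u',v'}}"] pd[of "{{u',v'}}"] unfolding C_def by simp
  next
    case False
    hence "\<not> \<Union>{{u',v'}} \<subseteq> X" by auto
    hence "S {{u',v'}} = {}" unfolding S_def by (rule class_empty)
    thus ?thesis by (simp only: if_not_P[OF False] card.empty)
  qed
  have s3: "card (S {{u,v},{u',v'}}) = (if u\<in>X \<and> v\<in>X \<and> u'\<in>X \<and> v'\<in>X then cnt E1 (X\<inter>V1 - {u,u'}) * cnt E2 (X\<inter>V2 - {v,v'}) else 0)"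
  proof (cases "u\<in>X \<and> v\<in>X \<and> u'\<in>X \<and> v'\<in>X")
    case True
    have "X \<inter> V1 - \<Union>{{u,v},{u',v'}} = X\<inter>V1 - {u,u'}" "X \<inter> V2 - \<Union>{{u,v},{u',v'}} = X\<inter>V2 - {v,v'}" using uv1 by auto
    moreover have "\<Union>{{u,v},{u',v'}} \<subseteq> X" using True by auto
    ultimately show ?thesis using True key[of "{{u,v},{u',v'}}"] pd[of "{{u,v},{u',v'}}"] unfolding C_def by simp
  next
    case False
    hence "\<not> \<Union>{{u,v},{u',v'}} \<subseteq> X" by auto
    hence "S {{u,v},{u',v'}} = {}" unfolding S_def by (rule class_empty)
    thus ?thesis by (simp only: if_not_P[OF False] card.empty)
  qed
  show ?thesis using cardP s0 s1 s2 s3 unfolding cnt_def E_def C_def by simp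
qed



definition NI :: "int \<Rightarrow> int \<Rightarrow> int \<Rightarrow> int \<Rightarrow> int \<Rightarrow> int \<Rightarrow> nat \<Rightarrow> bool" where
  "NI m11 m12 m21 m22 z p n \<longleftrightarrow> 1 \<le> m11 \<and> 1 \<le> m12 \<and> 1 \<le> m21 \<and> 1 \<le> m22 \<and> 1 \<le> z \<and> 1 \<le> p \<and> 4 \<le> n \<and>
     m11*m22 \<le> m12*m21 + p*z \<and> m12*m21 \<le> m11*m22 + p*z \<and> p*z \<le> m11*m22 + m12*m21 \<and>
     2^(n-2) \<le> (m11*m22)*(m12*m21)*p^2"

lemma NI_swap_rows: "NI m11 m12 m21 m22 z p n \<Longrightarrow> NI m21 m22 m11 m12 z p n"
  unfolding NI_def by (simp add: algebra_simps)
lemma NI_swap_cols: "NI m11 m12 m21 m22 z p n \<Longrightarrow> NI m12 m11 m22 m21 z p n"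
  unfolding NI_def by (simp add: algebra_simps)
lemma NI_transp: "NI m11 m12 m21 m22 z p n \<Longrightarrow> NI m11 m21 m12 m22 z p n"
  unfolding NI_def by (simp add: algebra_simps)

lemma amgm4: "4*a*b \<le> (a+b)^2" for a b :: int
proof -
  have "(a+b)^2 - 4*a*b = (a-b)^2" by (simp add: power2_eq_square algebra_simps)
  moreover have "(a-b)^2 \<ge> 0" by simp
  ultimately show ?thesis by linarith
qed

lemma abs_prod_le: fixes a b x y :: int
  assumes "\<bar>a\<bar> \<le> x" "\<bar>b\<bar> \<le> y" shows "a*b \<le> x*y" "-(a*b) \<le> x*y"
proof -
  have "\<bar>a*b\<bar> \<le> x*y" unfolding abs_mult using assms by (intro mult_mono) auto
  thus "a*b \<le> x*y" "-(a*b) \<le> x*y" by auto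
qed

lemma pow_n2: "4 \<le> n \<Longrightarrow> (2::int)^(n+2-2) = 4 * 2^(n-2)"
proof -
  assume "4 \<le> n"
  then obtain k where "n = k + 2" by (metis add.commute le_Suc_ex numeral_Bit0 numeral_One one_add_one le_add2 le_trans)
  thus ?thesis by simp
qed

lemma alg_E:
  assumes "NI t11 t12 t21 t22 z p n"
  shows "NI (t22+z) t21 t12 p t22 (p+t11) (n+2)"
proof -
  have a: "1 \<le> t11" "1 \<le> t12" "1 \<le> t21" "1 \<le> t22" "1 \<le> z" "1 \<le> p" "4 \<le> n"
    "t11*t22 \<le> t12*t21 + p*z" "t12*t21 \<le> t11*t22 + p*z" "p*z \<le> t11*t22 + t12*t21"
    "2^(n-2) \<le> (t11*t22)*(t12*t21)*p^2" using assms unfolding NI_def by auto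
  have k1: "(t22+z)*p \<le> t21*t12 + (p+t11)*t22" using a(10) by (simp add: algebra_simps)
  have k2: "t21*t12 \<le> (t22+z)*p + (p+t11)*t22"
  proof -
    have "0 \<le> t22*p" using a by simp
    thus ?thesis using a(9) by (simp add: algebra_simps)
  qed
  have k3: "(p+t11)*t22 \<le> (t22+z)*p + t21*t12" using a(8) by (simp add: algebra_simps)
  have h1: "4*p*t11 \<le> (p+t11)^2" by (rule amgm4)
  have h2: "t22*p \<le> (t22+z)*p" using a by simp
  have "4 * 2^(n-2) \<le> 4*((t11*t22)*(t12*t21)*p^2)" using a(11) by simp
  also have "\<dots> = (t22*p)*(t21*t12)*(4*p*t11)" by (simp add: power2_eq_square algebra_simps)
  also have "\<dots> \<le> ((t22+z)*p)*(t21*t12)*((p+t11)^2)"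
    using a h1 h2 by (intro mult_mono) auto
  finally have k4: "2^(n+2-2) \<le> ((t22+z)*p)*(t21*t12)*(p+t11)^2" using pow_n2[OF a(7)] by simp
  show ?thesis unfolding NI_def using a k1 k2 k3 k4 by auto
qed
lemma pow_add2: "4 \<le> a \<Longrightarrow> 4 \<le> b \<Longrightarrow> (2::int)^(a+b-2) = 4 * (2^(a-2) * 2^(b-2))"
proof -
  assume "4 \<le> a" "4 \<le> b"
  then obtain k l where "a = k + 2" "b = l + 2"
    by (metis add.commute le_Suc_ex numeral_Bit0 numeral_One one_add_one le_add2 le_trans)
  thus ?thesis by (simp add: power_add)
qed

lemma NI_unf: "NI m11 m12 m21 m22 z p n \<Longrightarrow> 1 \<le> m11 \<and> 1 \<le> m12 \<and> 1 \<le> m21 \<and> 1 \<le> m22 \<and> 1 \<le> z \<and> 1 \<le> p \<and> 4 \<le> n \<and>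
     m11*m22 \<le> m12*m21 + p*z \<and> m12*m21 \<le> m11*m22 + p*z \<and> p*z \<le> m11*m22 + m12*m21 \<and>
     2^(n-2) \<le> (m11*m22)*(m12*m21)*p^2" unfolding NI_def by simp

lemma one_le_prod: "1 \<le> a \<Longrightarrow> 1 \<le> b \<Longrightarrow> (1::int) \<le> a*b"
proof -
  assume "1 \<le> a" "1 \<le> b"
  hence "1*1 \<le> a*b" by (intro mult_mono) auto
  thus ?thesis by simp
qed

lemma one_le_sp: "1 \<le> a \<Longrightarrow> 1 \<le> b \<Longrightarrow> 0 \<le> c \<Longrightarrow> 0 \<le> d \<Longrightarrow> (1::int) \<le> a*b + c*d"
  using one_le_prod[of a b] mult_nonneg_nonneg[of c d] by linarith

lemma alg_I:
  assumes T: "NI t11 t12 t21 t22 zt pt nt" and H: "NI h11 h12 h21 h22 zh ph nh"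
  shows "NI (t11*h11 + t21*h12) (t12*h11 + t22*h12) (t11*h21 + t21*h22) (t12*h21 + t22*h22) (zt*zh) (pt*ph) (nt+nh)"
proof -
  note a = NI_unf[OF T] and b = NI_unf[OF H]
  define g11 where "g11 = t11*h11 + t21*h12"
  define g12 where "g12 = t12*h11 + t22*h12"
  define g21 where "g21 = t11*h21 + t21*h22"
  define g22 where "g22 = t12*h21 + t22*h22"
  define a1 where "a1 = t11*t22" define a2 where "a2 = t12*t21"
  define b1 where "b1 = h11*h22" define b2 where "b2 = h12*h21"
  define x where "x = pt*zt" define y where "y = ph*zh"
  have pos: "0 \<le> t11" "0 \<le> t12" "0 \<le> t21" "0 \<le> t22" "0 \<le> h11" "0 \<le> h12" "0 \<le> h21" "0 \<le> h22"
    "0 \<le> pt" "0 \<le> ph" "0 \<le> zt" "0 \<le> zh" using a b by auto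
  have pa: "0 \<le> a1" "0 \<le> a2" "0 \<le> b1" "0 \<le> b2" "0 \<le> x" "0 \<le> y"
    unfolding a1_def a2_def b1_def b2_def x_def y_def using pos by auto
  have kt: "\<bar>a1 - a2\<bar> \<le> x" "x \<le> a1 + a2" using a unfolding a1_def a2_def x_def by auto
  have kh: "\<bar>b1 - b2\<bar> \<le> y" "y \<le> b1 + b2" using b unfolding b1_def b2_def y_def by auto
  have e1: "g11*g22 - g12*g21 = (a1 - a2)*(b1 - b2)"
    unfolding g11_def g12_def g21_def g22_def a1_def a2_def b1_def b2_def by (simp add: algebra_simps)
  have e2: "g11*g22 = a1*b1 + a2*b2 + (t11*h11*t12*h21 + t21*h12*t22*h22)"
    unfolding g11_def g22_def a1_def a2_def b1_def b2_def by (simp add: algebra_simps)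
  have e3: "g12*g21 = a2*b1 + a1*b2 + (t12*h11*t11*h21 + t22*h12*t21*h22)"
    unfolding g12_def g21_def a1_def a2_def b1_def b2_def by (simp add: algebra_simps)
  have c1: "0 \<le> t11*h11*t12*h21 + t21*h12*t22*h22" "0 \<le> t12*h11*t11*h21 + t22*h12*t21*h22"
    using pos by auto
  have f1: "g11*g22 \<ge> a1*b1 + a2*b2" "g12*g21 \<ge> a2*b1 + a1*b2" using e2 e3 c1 by auto
  have k1: "g11*g22 \<le> g12*g21 + (pt*ph)*(zt*zh)"
  proof -
    have "(a1 - a2)*(b1 - b2) \<le> x*y" by (rule abs_prod_le(1)[OF kt(1) kh(1)])
    thus ?thesis using e1 unfolding x_def y_def by (simp add: algebra_simps)
  qed
  have k2: "g12*g21 \<le> g11*g22 + (pt*ph)*(zt*zh)"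
  proof -
    have "-((a1 - a2)*(b1 - b2)) \<le> x*y" by (rule abs_prod_le(2)[OF kt(1) kh(1)])
    thus ?thesis using e1 unfolding x_def y_def by (simp add: algebra_simps)
  qed
  have k3: "(pt*ph)*(zt*zh) \<le> g11*g22 + g12*g21"
  proof -
    have "x*y \<le> (a1+a2)*(b1+b2)" using kt kh pa by (intro mult_mono) auto
    also have "\<dots> \<le> g11*g22 + g12*g21" using f1 by (simp add: algebra_simps)
    finally show ?thesis unfolding x_def y_def by (simp add: algebra_simps)
  qed
  have sq: "(a1*b1 + a2*b2)*(a2*b1 + a1*b2) - 4*(a1*a2)*(b1*b2) = a1*a2*(b1-b2)^2 + b1*b2*(a1-a2)^2"
    by (simp add: power2_eq_square algebra_simps)
  have "0 \<le> a1*a2*(b1-b2)^2 + b1*b2*(a1-a2)^2" using pa by simp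
  hence m1: "4*(a1*a2)*(b1*b2) \<le> (a1*b1 + a2*b2)*(a2*b1 + a1*b2)" using sq by linarith
  have nn: "0 \<le> a1*b1 + a2*b2" "0 \<le> a2*b1 + a1*b2" using pa by auto
  have nn2: "0 \<le> g11*g22" using nn f1 by linarith
  have m2: "(a1*b1 + a2*b2)*(a2*b1 + a1*b2) \<le> (g11*g22)*(g12*g21)"
    using f1 nn nn2 by (intro mult_mono) auto
  have "(2::int)^(nt+nh-2) = 4*(2^(nt-2)*2^(nh-2))" by (rule pow_add2) (use a b in auto)
  also have "\<dots> \<le> 4*(((a1*a2)*pt^2)*((b1*b2)*ph^2))"
    using a b unfolding a1_def a2_def b1_def b2_def by (intro mult_left_mono mult_mono) auto
  also have "\<dots> = (4*(a1*a2)*(b1*b2))*(pt*ph)^2" by (simp add: power2_eq_square algebra_simps)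
  also have "\<dots> \<le> ((g11*g22)*(g12*g21))*(pt*ph)^2"
    using m1 m2 by (intro mult_right_mono) auto
  finally have k4: "2^(nt+nh-2) \<le> (g11*g22)*(g12*g21)*(pt*ph)^2" .
  have gp: "1 \<le> g11" "1 \<le> g12" "1 \<le> g21" "1 \<le> g22"
    unfolding g11_def g12_def g21_def g22_def using a b pos by (auto intro: one_le_sp)
  have "1 \<le> zt*zh" "1 \<le> pt*ph" using a b by (auto intro: one_le_prod)
  thus ?thesis unfolding NI_def using gp k1 k2 k3 k4 a b unfolding g11_def g12_def g21_def g22_def
    by (simp add: algebra_simps)
qed
lemma alg_II:
  assumes T: "NI t11 t12 t21 t22 zt pt nt" and H: "NI h11 h12 h21 h22 zh ph nh"
  shows "NI (t22*ph + zt*h11) (t21*h12) (t12*h21) (pt*h22 + t11*zh) (t22*h22 + zt*zh) (pt*ph + t11*h11) (nt+nh)"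
proof -
  note a = NI_unf[OF T] and b = NI_unf[OF H]
  define G where "G = (t22*ph + zt*h11)*(pt*h22 + t11*zh)"
  define P where "P = (pt*ph + t11*h11)*(t22*h22 + zt*zh)"
  define a1 where "a1 = t11*t22" define a2 where "a2 = t12*t21"
  define b1 where "b1 = h11*h22" define b2 where "b2 = h12*h21"
  define x where "x = pt*zt" define y where "y = ph*zh"
  have pos: "0 \<le> t11" "0 \<le> t12" "0 \<le> t21" "0 \<le> t22" "0 \<le> h11" "0 \<le> h12" "0 \<le> h21" "0 \<le> h22"
    "0 \<le> pt" "0 \<le> ph" "0 \<le> zt" "0 \<le> zh" using a b by auto
  have pa: "0 \<le> a1" "0 \<le> a2" "0 \<le> b1" "0 \<le> b2" "0 \<le> x" "0 \<le> y"
    unfolding a1_def a2_def b1_def b2_def x_def y_def using pos by auto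
  have kt: "\<bar>x - a1\<bar> \<le> a2" "a2 \<le> a1 + x" using a unfolding a1_def a2_def x_def by auto
  have kh: "\<bar>y - b1\<bar> \<le> b2" "b2 \<le> b1 + y" using b unfolding b1_def b2_def y_def by auto
  have i1: "P - G = (x - a1)*(y - b1)"
    unfolding P_def G_def a1_def b1_def x_def y_def by (simp add: algebra_simps)
  have i2: "G = a1*y + x*b1 + (t22*h22*pt*ph + t11*h11*zt*zh)"
    unfolding G_def a1_def b1_def x_def y_def by (simp add: algebra_simps)
  have i3: "0 \<le> t22*h22*pt*ph + t11*h11*zt*zh" using pos by auto
  have d2: "(t21*h12)*(t12*h21) = a2*b2" unfolding a2_def b2_def by (simp add: algebra_simps)
  have k1: "G \<le> (t21*h12)*(t12*h21) + P"
    using abs_prod_le(2)[OF kt(1) kh(1)] i1 d2 by linarith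
  have k3: "P \<le> G + (t21*h12)*(t12*h21)"
    using abs_prod_le(1)[OF kt(1) kh(1)] i1 d2 by linarith
  have k2: "(t21*h12)*(t12*h21) \<le> G + P"
  proof -
    have "a2*b2 \<le> (a1 + x)*(b1 + y)" using kt kh pa by (intro mult_mono) auto
    also have "(a1 + x)*(b1 + y) = 2*(a1*y + x*b1) + (x - a1)*(y - b1)" by (simp add: algebra_simps)
    also have "\<dots> \<le> G + P"
    proof -
      have "a1*y + x*b1 \<le> G" unfolding i2 using i3 by (rule le_add_same_cancel1[THEN iffD2])
      hence "2*(a1*y + x*b1) \<le> 2*G" by simp
      moreover have "P = G + (x - a1)*(y - b1)" using i1 by simp
      ultimately show ?thesis by linarith
    qed
    finally show ?thesis using d2 by simp
  qed
  have g1: "t22*h22*(pt*ph) \<le> G" using i2 pa pos by (simp add: algebra_simps)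
  have g0: "0 \<le> t22*h22*(pt*ph)" using pos by simp
  have G0: "0 \<le> G" "0 \<le> G*(a2*b2)" using order_trans[OF g0 g1] pa by auto
  have sq: "4*(pt*ph)*(t11*h11) \<le> (pt*ph + t11*h11)^2" by (rule amgm4)
  have "(2::int)^(nt+nh-2) = 4*(2^(nt-2)*2^(nh-2))" by (rule pow_add2) (use a b in auto)
  also have "\<dots> \<le> 4*(((a1*a2)*pt^2)*((b1*b2)*ph^2))"
    using a b unfolding a1_def a2_def b1_def b2_def by (intro mult_left_mono mult_mono) auto
  also have "\<dots> = (t22*h22*(pt*ph))*(a2*b2)*(4*(pt*ph)*(t11*h11))"
    unfolding a1_def a2_def b1_def b2_def by (simp add: power2_eq_square algebra_simps)
  also have "\<dots> \<le> G*(a2*b2)*((pt*ph + t11*h11)^2)"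
    using g1 g0 sq pa pos G0 by (intro mult_mono) auto
  finally have k4: "2^(nt+nh-2) \<le> G*((t21*h12)*(t12*h21))*(pt*ph + t11*h11)^2" using d2 by simp
  have gp: "1 \<le> t22*ph + zt*h11" "1 \<le> t21*h12" "1 \<le> t12*h21" "1 \<le> pt*h22 + t11*zh"
    "1 \<le> t22*h22 + zt*zh" "1 \<le> pt*ph + t11*h11"
    using a b pos by (auto intro: one_le_sp one_le_prod)
  show ?thesis unfolding NI_def using gp k1 k2 k3 k4 a b unfolding G_def P_def
    by (simp add: algebra_simps)
qed


lemma extract_bound:
  assumes "NI m11 m12 m21 m22 z p n"
  shows "2 powr (real n / 18 - 2/9) \<le> real_of_int (max (max m11 m12) (max m21 m22))"
proof -
  note a = NI_unf[OF assms]
  define M where "M = max (max m11 m12) (max m21 m22)"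
  have mb: "m11 \<le> M" "m12 \<le> M" "m21 \<le> M" "m22 \<le> M" "1 \<le> M" unfolding M_def using a by auto
  have d1: "m11*m22 \<le> M^2" using mb a unfolding power2_eq_square by (intro mult_mono) auto
  have d2: "m12*m21 \<le> M^2" using mb a unfolding power2_eq_square by (intro mult_mono) auto
  have "p = p*1" by simp
  also have "\<dots> \<le> p*z" using a by (intro mult_left_mono) auto
  also have "\<dots> \<le> 2*M^2" using a d1 d2 by linarith
  finally have pb: "p \<le> 2*M^2" .
  have "(2::int)^(n-2) \<le> (m11*m22)*(m12*m21)*p^2" using a by simp
  also have "\<dots> \<le> M^2*M^2*(2*M^2)^2"
    using d1 d2 pb a by (intro mult_mono power_mono) auto
  also have "\<dots> = 4*M^8" by algebra
  finally have h: "(2::int)^(n-2) \<le> 4*M^8" .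
  obtain k where nk: "n = k + 4" using a by (metis add.commute le_Suc_ex)
  have "(2::int)^(n-2) = 4*2^k" using nk by (simp add: power_add)
  hence "(2::int)^k \<le> M^8" using h by simp
  hence hr: "(2::real)^k \<le> (real_of_int M)^8" by (metis of_int_le_iff of_int_numeral of_int_power)
  have e: "(2 powr (real k / 8))^8 = (2::real)^k"
  proof -
    have "(2 powr (real k / 8))^8 = (2 powr (real k / 8)) powr (real 8)" by (simp add: powr_realpow)
    also have "\<dots> = 2 powr (real k / 8 * 8)" by (simp add: powr_powr)
    also have "\<dots> = 2 powr (real k)" by simp
    also have "\<dots> = 2^k" by (simp add: powr_realpow)
    finally show ?thesis .
  qed
  have "2 powr (real k / 8) \<le> real_of_int M"
  proof (rule power_le_imp_le_base[of _ 7])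
    show "(2 powr (real k / 8)) ^ Suc 7 \<le> real_of_int M ^ Suc 7" using hr e by (simp add: numeral_eq_Suc[symmetric])
    show "0 \<le> real_of_int M" using mb by simp
  qed
  moreover have "2 powr (real n / 18 - 2/9) \<le> 2 powr (real k / 8)"
    by (rule powr_mono) (use nk in \<open>auto simp: field_simps\<close>)
  ultimately show ?thesis unfolding M_def by linarith
qed



lemma pm_card_class:
  assumes C: "\<forall>e\<in>E. card (e \<inter> C) = 1" and M: "M \<in> pm E X"
  shows "card M = card (X \<inter> C)"
proof -
  have Ms: "M \<subseteq> {e\<in>E. e \<subseteq> X}" and Mu: "\<forall>x\<in>X. \<exists>!e. e\<in>M \<and> x\<in>e"
    using M unfolding pm_def by auto
  have sing: "\<exists>c. e \<inter> C = {c}" if "e \<in> M" for e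
  proof -
    have "e \<in> E" using that Ms by auto
    hence "card (e \<inter> C) = 1" using C by auto
    thus ?thesis by (simp add: card_1_singleton_iff)
  qed
  define f where "f e = the_elem (e \<inter> C)" for e
  have fe: "e \<inter> C = {f e}" if eM: "e \<in> M" for e
  proof -
    obtain c where c: "e \<inter> C = {c}" using sing[OF eM] by blast
    show ?thesis unfolding f_def c by simp
  qed
  have "bij_betw f M (X \<inter> C)"
    unfolding bij_betw_def
  proof
    show "inj_on f M"
    proof (rule inj_onI)
      fix e e' assume e: "e \<in> M" "e' \<in> M" "f e = f e'"
      have "f e \<in> e" "f e \<in> e'" using fe[OF e(1)] fe[OF e(2)] e(3) by auto
      moreover have "f e \<in> X" using \<open>f e \<in> e\<close> e(1) Ms by auto
      ultimately show "e = e'" using Mu[rule_format, OF \<open>f e \<in> X\<close>] e(1,2) by auto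
    qed
    show "f ` M = X \<inter> C"
    proof
      show "f ` M \<subseteq> X \<inter> C"
      proof
        fix y assume "y \<in> f ` M"
        then obtain e where e: "e \<in> M" "y = f e" by auto
        hence "y \<in> e \<inter> C" using fe[OF e(1)] by auto
        thus "y \<in> X \<inter> C" using e(1) Ms by auto
      qed
      show "X \<inter> C \<subseteq> f ` M"
      proof
        fix x assume x: "x \<in> X \<inter> C"
        then obtain e where e: "e \<in> M" "x \<in> e" using Mu by auto
        hence "x \<in> e \<inter> C" using x by auto
        hence "x = f e" using fe[OF e(1)] by auto
        thus "x \<in> f ` M" using e by auto
      qed
    qed
  qed
  thus ?thesis by (rule bij_betw_same_card)
qed

lemma cnt_zero:
  assumes "\<forall>e\<in>E. card (e \<inter> A) = 1 \<and> card (e \<inter> B) = 1" "card (X \<inter> A) \<noteq> card (X \<inter> B)"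
  shows "cnt E X = 0"
proof -
  have "pm E X = {}"
  proof (rule ccontr)
    assume "pm E X \<noteq> {}"
    then obtain M where M: "M \<in> pm E X" by auto
    have "card M = card (X \<inter> A)" by (rule pm_card_class[OF _ M]) (use assms(1) in auto)
    moreover have "card M = card (X \<inter> B)" by (rule pm_card_class[OF _ M]) (use assms(1) in auto)
    ultimately have "card (X \<inter> A) = card (X \<inter> B)" by simp
    thus False using assms(2) by simp
  qed
  thus ?thesis unfolding cnt_def by simp
qed

lemma cnt_pos_bal:
  assumes "\<forall>e\<in>E. card (e \<inter> A) = 1 \<and> card (e \<inter> B) = 1" "1 \<le> cnt E X"
  shows "card (X \<inter> A) = card (X \<inter> B)"
proof (rule ccontr)
  assume "card (X \<inter> A) \<noteq> card (X \<inter> B)"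
  hence "cnt E X = 0" by (rule cnt_zero[OF assms(1)])
  thus False using assms(2) by simp
qed

lemma cnt_del_zero:
  assumes bip: "\<forall>e\<in>E. card (e \<inter> A) = 1 \<and> card (e \<inter> B) = 1"
    and fin: "finite V1" and bal: "card (V1 \<inter> A) = card (V1 \<inter> B)"
    and S: "S \<subseteq> V1" and ne: "card (S \<inter> A) \<noteq> card (S \<inter> B)"
  shows "cnt E (V1 - S) = 0"
proof (rule cnt_zero[OF bip])
  have e1: "(V1 - S) \<inter> A = (V1 \<inter> A) - (S \<inter> A)" "(V1 - S) \<inter> B = (V1 \<inter> B) - (S \<inter> B)" by auto
  have fS: "finite (S \<inter> A)" "finite (S \<inter> B)" using S fin finite_subset by auto
  have c1: "card ((V1 \<inter> A) - (S \<inter> A)) = card (V1 \<inter> A) - card (S \<inter> A)"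
    using S fS by (intro card_Diff_subset) auto
  have c2: "card ((V1 \<inter> B) - (S \<inter> B)) = card (V1 \<inter> B) - card (S \<inter> B)"
    using S fS by (intro card_Diff_subset) auto
  have l1: "card (S \<inter> A) \<le> card (V1 \<inter> A)" using S fin by (intro card_mono) auto
  have l2: "card (S \<inter> B) \<le> card (V1 \<inter> B)" using S fin by (intro card_mono) auto
  have "card (V1 \<inter> A) - card (S \<inter> A) \<noteq> card (V1 \<inter> B) - card (S \<inter> B)"
    using l1 l2 bal ne by linarith
  thus "card ((V1 - S) \<inter> A) \<noteq> card ((V1 - S) \<inter> B)" unfolding e1 c1 c2 .
qed




definition tn_ok :: "'a set \<Rightarrow> 'a set set \<Rightarrow> bool" where
  "tn_ok V E \<longleftrightarrow> finite V \<and> finite E \<and> (\<forall>e\<in>E. e \<subseteq> V \<and> card e = 2) \<and> (\<forall>x\<in>V. 2 \<le> degree E x)"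

lemma degree_join1:
  assumes E1: "\<forall>e\<in>E1. e \<subseteq> V1" and E2: "\<forall>e\<in>E2. e \<subseteq> V2" and V12: "V1 \<inter> V2 = {}"
    and x: "x \<in> V1" and v: "v \<notin> V1" "v' \<notin> V1" and uu: "u \<noteq> u'" and fin: "finite E1"
  shows "degree (E1 \<union> E2 \<union> {{u,v},{u',v'}}) x = degree E1 x + (if x = u then 1 else 0) + (if x = u' then 1 else 0)"
proof -
  have xV2: "x \<notin> V2" using x V12 by auto
  have s: "{e \<in> E1 \<union> E2 \<union> {{u,v},{u',v'}}. x \<in> e} = {e\<in>E1. x\<in>e} \<union> {e\<in>{{u,v},{u',v'}}. x\<in>e}"
    using E2 xV2 by auto
  have d: "{e\<in>E1. x\<in>e} \<inter> {e\<in>{{u,v},{u',v'}}. x\<in>e} = {}"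
  proof -
    have "{u,v} \<notin> E1" "{u',v'} \<notin> E1" using E1 v by auto
    thus ?thesis by auto
  qed
  have xv: "x \<noteq> v" "x \<noteq> v'" using x v by auto
  have c: "card {e\<in>{{u,v},{u',v'}}. x\<in>e} = (if x = u then 1 else 0) + (if x = u' then 1 else 0)"
  proof (cases "x = u")
    case True
    hence "{e\<in>{{u,v},{u',v'}}. x\<in>e} = {{u,v}}" using xv uu by auto
    thus ?thesis using True uu by simp
  next
    case False
    show ?thesis
    proof (cases "x = u'")
      case True
      hence "{e\<in>{{u,v},{u',v'}}. x\<in>e} = {{u',v'}}" using xv False by auto
      thus ?thesis using True False by simp
    next
      case False2: False
      hence "{e\<in>{{u,v},{u',v'}}. x\<in>e} = {}" using xv False by auto
      thus ?thesis using False False2 by simp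
    qed
  qed
  have "degree (E1 \<union> E2 \<union> {{u,v},{u',v'}}) x = card ({e\<in>E1. x\<in>e} \<union> {e\<in>{{u,v},{u',v'}}. x\<in>e})"
    unfolding degree_def s ..
  also have "\<dots> = card {e\<in>E1. x\<in>e} + card {e\<in>{{u,v},{u',v'}}. x\<in>e}"
    by (rule card_Un_disjoint) (use fin d in auto)
  finally show ?thesis using c unfolding degree_def by simp
qed

lemma join_comm: "E1 \<union> E2 \<union> {{u,v},{u',v'}} = E2 \<union> E1 \<union> {{v,u},{v',u'}}"
  by (auto simp: insert_commute)

lemma degree_join2:
  assumes E1: "\<forall>e\<in>E1. e \<subseteq> V1" and E2: "\<forall>e\<in>E2. e \<subseteq> V2" and V12: "V1 \<inter> V2 = {}"
    and x: "x \<in> V2" and u: "u \<notin> V2" "u' \<notin> V2" and vv: "v \<noteq> v'" and fin: "finite E2"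
  shows "degree (E1 \<union> E2 \<union> {{u,v},{u',v'}}) x = degree E2 x + (if x = v then 1 else 0) + (if x = v' then 1 else 0)"
proof -
  have eq: "E1 \<union> E2 \<union> {{u,v},{u',v'}} = E2 \<union> E1 \<union> {{v,u},{v',u'}}" by (rule join_comm)
  show ?thesis unfolding eq by (rule degree_join1[OF E2 E1 _ x u vv fin]) (use V12 in auto)
qed

lemma corners_join:
  assumes ok1: "tn_ok V1 E1" and ok2: "tn_ok V2 E2" and V12: "V1 \<inter> V2 = {}"
    and u: "u \<in> corners V1 E1" "u' \<in> corners V1 E1" "u \<noteq> u'"
    and v: "v \<in> corners V2 E2" "v' \<in> corners V2 E2" "v \<noteq> v'"
  shows "corners (V1 \<union> V2) (E1 \<union> E2 \<union> {{u,v},{u',v'}}) = (corners V1 E1 - {u,u'}) \<union> (corners V2 E2 - {v,v'})"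
proof -
  have E1: "\<forall>e\<in>E1. e \<subseteq> V1" and E2: "\<forall>e\<in>E2. e \<subseteq> V2" and f1: "finite E1" and f2: "finite E2"
    and g1: "\<forall>x\<in>V1. 2 \<le> degree E1 x" and g2: "\<forall>x\<in>V2. 2 \<le> degree E2 x"
    using ok1 ok2 unfolding tn_ok_def by auto
  have uV: "u \<in> V1" "u' \<in> V1" "degree E1 u = 2" "degree E1 u' = 2" using u unfolding corners_def by auto
  have vV: "v \<in> V2" "v' \<in> V2" "degree E2 v = 2" "degree E2 v' = 2" using v unfolding corners_def by auto
  have nv: "v \<notin> V1" "v' \<notin> V1" "u \<notin> V2" "u' \<notin> V2" using uV vV V12 by auto
  show ?thesis
  proof (rule set_eqI)
    fix x
    show "x \<in> corners (V1 \<union> V2) (E1 \<union> E2 \<union> {{u,v},{u',v'}}) \<longleftrightarrow>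
          x \<in> (corners V1 E1 - {u,u'}) \<union> (corners V2 E2 - {v,v'})"
    proof (cases "x \<in> V1")
      case True
      have d: "degree (E1 \<union> E2 \<union> {{u,v},{u',v'}}) x = degree E1 x + (if x = u then 1 else 0) + (if x = u' then 1 else 0)"
        by (rule degree_join1[OF E1 E2 V12 True nv(1,2) u(3) f1])
      have "x \<notin> V2" using True V12 by auto
      moreover have "2 \<le> degree E1 x" using g1 True by auto
      ultimately show ?thesis using d True uV u(3) unfolding corners_def by auto
    next
      case False
      show ?thesis
      proof (cases "x \<in> V2")
        case True
        have d: "degree (E1 \<union> E2 \<union> {{u,v},{u',v'}}) x = degree E2 x + (if x = v then 1 else 0) + (if x = v' then 1 else 0)"
          by (rule degree_join2[OF E1 E2 V12 True nv(3,4) v(3) f2])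
        have "2 \<le> degree E2 x" using g2 True by auto
        thus ?thesis using d True False vV v(3) unfolding corners_def by auto
      next
        case False2: False
        thus ?thesis using False unfolding corners_def by auto
      qed
    qed
  qed
qed

lemma corners_edge:
  assumes ok1: "tn_ok V1 E1" and ab: "a \<noteq> b" "a \<notin> V1" "b \<notin> V1"
    and u: "u \<in> corners V1 E1" "u' \<in> corners V1 E1" "u \<noteq> u'"
  shows "corners (V1 \<union> {a,b}) (E1 \<union> {{a,b}} \<union> {{u,a},{u',b}}) = (corners V1 E1 - {u,u'}) \<union> {a,b}"
proof -
  have E1: "\<forall>e\<in>E1. e \<subseteq> V1" and f1: "finite E1"
    and g1: "\<forall>x\<in>V1. 2 \<le> degree E1 x"
    using ok1 unfolding tn_ok_def by auto
  have E2: "\<forall>e\<in>{{a,b}}. e \<subseteq> {a,b}" by auto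
  have V12: "V1 \<inter> {a,b} = {}" using ab by auto
  have uV: "u \<in> V1" "u' \<in> V1" "degree E1 u = 2" "degree E1 u' = 2" using u unfolding corners_def by auto
  have nv: "a \<notin> V1" "b \<notin> V1" "u \<notin> {a,b}" "u' \<notin> {a,b}" using uV ab by auto
  have "{e \<in> {{a,b}}. a \<in> e} = {{a,b}}" "{e \<in> {{a,b}}. b \<in> e} = {{a,b}}" by auto
  hence dab: "degree {{a,b}} a = 1" "degree {{a,b}} b = 1" unfolding degree_def by simp_all
  show ?thesis
  proof (rule set_eqI)
    fix x
    show "x \<in> corners (V1 \<union> {a,b}) (E1 \<union> {{a,b}} \<union> {{u,a},{u',b}}) \<longleftrightarrow>
          x \<in> (corners V1 E1 - {u,u'}) \<union> {a,b}"
    proof (cases "x \<in> V1")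
      case True
      have d: "degree (E1 \<union> {{a,b}} \<union> {{u,a},{u',b}}) x = degree E1 x + (if x = u then 1 else 0) + (if x = u' then 1 else 0)"
        by (rule degree_join1[OF E1 E2 V12 True nv(1,2) u(3) f1])
      have "x \<notin> {a,b}" using True ab by auto
      moreover have "2 \<le> degree E1 x" using g1 True by auto
      ultimately show ?thesis using d True uV u(3) unfolding corners_def by auto
    next
      case False
      show ?thesis
      proof (cases "x \<in> {a,b}")
        case True
        have d: "degree (E1 \<union> {{a,b}} \<union> {{u,a},{u',b}}) x = degree {{a,b}} x + (if x = a then 1 else 0) + (if x = b then 1 else 0)"
          by (rule degree_join2[OF E1 E2 V12 True nv(3,4) ab(1)]) simp
        have "degree (E1 \<union> {{a,b}} \<union> {{u,a},{u',b}}) x = 2" using d True dab ab(1) by auto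
        thus ?thesis using True unfolding corners_def by auto
      next
        case False2: False
        thus ?thesis using False unfolding corners_def by auto
      qed
    qed
  qed
qed

lemma tn_struct: "twisted_net V E \<Longrightarrow> tn_ok V E"
proof (induction rule: twisted_net.induct)
  case (cycle4 a b c d)
  have dist: "a \<noteq> b" "a \<noteq> c" "a \<noteq> d" "b \<noteq> c" "b \<noteq> d" "c \<noteq> d" using cycle4 by auto
  have e: "\<forall>e\<in>{{a, b}, {b, c}, {c, d}, {d, a}}. e \<subseteq> {a,b,c,d} \<and> card e = 2" using dist by auto
  have da: "{e \<in> {{a, b}, {b, c}, {c, d}, {d, a}}. a \<in> e} = {{a,b},{d,a}}" using dist by auto
  have db: "{e \<in> {{a, b}, {b, c}, {c, d}, {d, a}}. b \<in> e} = {{a,b},{b,c}}" using dist by auto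
  have dc: "{e \<in> {{a, b}, {b, c}, {c, d}, {d, a}}. c \<in> e} = {{b,c},{c,d}}" using dist by auto
  have dd: "{e \<in> {{a, b}, {b, c}, {c, d}, {d, a}}. d \<in> e} = {{c,d},{d,a}}" using dist by auto
  have n: "{a,b} \<noteq> {d,a}" "{a,b} \<noteq> {b,c}" "{b,c} \<noteq> {c,d}" "{c,d} \<noteq> {d,a}" using dist by (auto simp: doubleton_eq_iff)
  have "\<forall>x\<in>{a,b,c,d}. 2 \<le> degree {{a, b}, {b, c}, {c, d}, {d, a}} x"
    unfolding degree_def using da db dc dd n by auto
  thus ?case unfolding tn_ok_def using e by auto
next
  case (join_net V1 E1 V2 E2 u u' v v')
  have E1: "\<forall>e\<in>E1. e \<subseteq> V1 \<and> card e = 2" and E2: "\<forall>e\<in>E2. e \<subseteq> V2 \<and> card e = 2" and f: "finite V1" "finite V2" "finite E1" "finite E2"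
    and g1: "\<forall>x\<in>V1. 2 \<le> degree E1 x" and g2: "\<forall>x\<in>V2. 2 \<le> degree E2 x"
    using join_net.IH unfolding tn_ok_def by auto
  have uV: "u \<in> V1" "u' \<in> V1" "v \<in> V2" "v' \<in> V2" using join_net.hyps unfolding corners_def by auto
  have nv: "v \<notin> V1" "v' \<notin> V1" "u \<notin> V2" "u' \<notin> V2" using uV join_net.hyps(3) by auto
  have e: "\<forall>e\<in>E1 \<union> E2 \<union> {{u,v},{u',v'}}. e \<subseteq> V1 \<union> V2 \<and> card e = 2"
    using E1 E2 uV nv by (auto simp: card_insert_if)
  have E1': "\<forall>e\<in>E1. e \<subseteq> V1" and E2': "\<forall>e\<in>E2. e \<subseteq> V2" using E1 E2 by auto
  have "2 \<le> degree (E1 \<union> E2 \<union> {{u,v},{u',v'}}) x" if x: "x \<in> V1 \<union> V2" for x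
  proof (cases "x \<in> V1")
    case True
    show ?thesis using degree_join1[OF E1' E2' join_net.hyps(3) True nv(1,2) join_net.hyps(6) f(3)] g1 True by auto
  next
    case False
    hence "x \<in> V2" using x by auto
    thus ?thesis using degree_join2[OF E1' E2' join_net.hyps(3) _ nv(3,4) join_net.hyps(9) f(4)] g2 by fastforce
  qed
  thus ?case unfolding tn_ok_def using e f by auto
next
  case (join_edge V1 E1 a b u u')
  have E1: "\<forall>e\<in>E1. e \<subseteq> V1 \<and> card e = 2" and f: "finite V1" "finite E1"
    and g1: "\<forall>x\<in>V1. 2 \<le> degree E1 x"
    using join_edge.IH unfolding tn_ok_def by auto
  have uV: "u \<in> V1" "u' \<in> V1" using join_edge.hyps unfolding corners_def by auto
  have nv: "a \<notin> V1" "b \<notin> V1" "u \<notin> {a,b}" "u' \<notin> {a,b}" using uV join_edge.hyps by auto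
  have e: "\<forall>e\<in>E1 \<union> {{a,b}} \<union> {{u,a},{u',b}}. e \<subseteq> V1 \<union> {a,b} \<and> card e = 2"
    using E1 uV nv join_edge.hyps(2) by (auto simp: card_insert_if)
  have E1': "\<forall>e\<in>E1. e \<subseteq> V1" and E2': "\<forall>e\<in>{{a,b}}. e \<subseteq> {a,b}" using E1 by auto
  have V12: "V1 \<inter> {a,b} = {}" using nv by auto
  have "{e \<in> {{a,b}}. a \<in> e} = {{a,b}}" "{e \<in> {{a,b}}. b \<in> e} = {{a,b}}" by auto
  hence dab: "degree {{a,b}} a = 1" "degree {{a,b}} b = 1" unfolding degree_def by simp_all
  have "2 \<le> degree (E1 \<union> {{a,b}} \<union> {{u,a},{u',b}}) x" if x: "x \<in> V1 \<union> {a,b}" for x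
  proof (cases "x \<in> V1")
    case True
    show ?thesis using degree_join1[OF E1' E2' V12 True nv(1,2) join_edge.hyps(7) f(2)] g1 True by auto
  next
    case False
    hence xab: "x \<in> {a,b}" using x by auto
    have "degree (E1 \<union> {{a,b}} \<union> {{u,a},{u',b}}) x = degree {{a,b}} x + (if x = a then 1 else 0) + (if x = b then 1 else 0)"
      by (rule degree_join2[OF E1' E2' V12 xab nv(3,4) join_edge.hyps(2)]) simp
    thus ?thesis using xab dab by auto
  qed
  thus ?case unfolding tn_ok_def using e f by auto
qed




definition Lab :: "'a set \<Rightarrow> 'a set set \<Rightarrow> 'a \<Rightarrow> 'a \<Rightarrow> 'a \<Rightarrow> 'a \<Rightarrow> bool" where
  "Lab V E a1 a2 b1 b2 \<longleftrightarrow> a1 \<noteq> a2 \<and> b1 \<noteq> b2 \<and> corners V E = {a1,a2,b1,b2} \<and>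
     NI (int (cnt E (V - {a1,b1}))) (int (cnt E (V - {a1,b2}))) (int (cnt E (V - {a2,b1}))) (int (cnt E (V - {a2,b2})))
        (int (cnt E (V - {a1,a2,b1,b2}))) (int (cnt E V)) (card V)"

lemma Lab_swapA: "Lab V E a1 a2 b1 b2 \<Longrightarrow> Lab V E a2 a1 b1 b2"
  unfolding Lab_def by (auto simp: insert_commute intro: NI_swap_rows)

lemma Lab_swapB: "Lab V E a1 a2 b1 b2 \<Longrightarrow> Lab V E a1 a2 b2 b1"
  unfolding Lab_def by (auto simp: insert_commute intro: NI_swap_cols)

lemma Lab_transp: "Lab V E a1 a2 b1 b2 \<Longrightarrow> Lab V E b1 b2 a1 a2"
proof -
  assume L: "Lab V E a1 a2 b1 b2"
  have s: "{b1,b2,a1,a2} = {a1,a2,b1,b2}" "{b1,a1} = {a1,b1}" "{b1,a2} = {a2,b1}" "{b2,a1} = {a1,b2}" "{b2,a2} = {a2,b2}"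
    by auto
  show ?thesis using L unfolding Lab_def s by (auto intro: NI_transp)
qed

lemma cnt_empty_set: "\<forall>e\<in>E. e \<noteq> {} \<Longrightarrow> cnt E {} = 1"
proof -
  assume "\<forall>e\<in>E. e \<noteq> {}"
  hence "pm E {} = {{}}" unfolding pm_def by auto
  thus ?thesis unfolding cnt_def by simp
qed

lemma cnt_edge2: "a \<noteq> b \<Longrightarrow> cnt {{a,b}} {a,b} = 1"
proof -
  assume ab: "a \<noteq> b"
  have "pm {{a,b}} {a,b} = {{{a,b}}}"
  proof
    show "pm {{a,b}} {a,b} \<subseteq> {{{a,b}}}"
    proof
      fix M assume M: "M \<in> pm {{a,b}} {a,b}"
      hence "M \<subseteq> {{a,b}}" "\<exists>e. e \<in> M \<and> a \<in> e" unfolding pm_def by auto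
      hence "M = {{a,b}}" by auto
      thus "M \<in> {{{a,b}}}" by simp
    qed
    show "{{{a,b}}} \<subseteq> pm {{a,b}} {a,b}" unfolding pm_def by auto
  qed
  thus ?thesis unfolding cnt_def by simp
qed

lemma cnt_edge1: "a \<noteq> b \<Longrightarrow> cnt {{a,b}} {a} = 0" "a \<noteq> b \<Longrightarrow> cnt {{a,b}} {b} = 0"
proof -
  assume ab: "a \<noteq> b"
  have "{e \<in> {{a,b}}. e \<subseteq> {a}} = {}" "{e \<in> {{a,b}}. e \<subseteq> {b}} = {}" using ab by auto
  hence "pm {{a,b}} {a} = {}" "pm {{a,b}} {b} = {}" unfolding pm_def by auto
  thus "cnt {{a,b}} {a} = 0" "cnt {{a,b}} {b} = 0" unfolding cnt_def by simp_all
qed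



lemma tn_facts:
  assumes "tn_ok V E"
  shows "finite V" "finite E" "\<forall>e\<in>E. e \<subseteq> V \<and> e \<noteq> {}" "\<forall>e\<in>E. e \<subseteq> V"
proof -
  show "finite V" "finite E" "\<forall>e\<in>E. e \<subseteq> V" using assms unfolding tn_ok_def by auto
  show "\<forall>e\<in>E. e \<subseteq> V \<and> e \<noteq> {}" using assms unfolding tn_ok_def by fastforce
qed

lemma Lab_NI: "Lab V E a1 a2 b1 b2 \<Longrightarrow> NI (int (cnt E (V - {a1,b1}))) (int (cnt E (V - {a1,b2}))) (int (cnt E (V - {a2,b1}))) (int (cnt E (V - {a2,b2})))
        (int (cnt E (V - {a1,a2,b1,b2}))) (int (cnt E V)) (card V)"
  unfolding Lab_def by simp

lemma Lab_p: "Lab V E a1 a2 b1 b2 \<Longrightarrow> 1 \<le> cnt E V"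
proof -
  assume "Lab V E a1 a2 b1 b2"
  from NI_unf[OF Lab_NI[OF this]] show ?thesis by simp
qed

lemma Z_lemma:
  assumes bip: "\<forall>e\<in>E. card (e \<inter> A) = 1 \<and> card (e \<inter> B) = 1" and fin: "finite V"
    and p: "1 \<le> cnt E V" and S: "S \<subseteq> V" "S \<inter> A = SA" "S \<inter> B = SB" "card SA \<noteq> card SB"
  shows "cnt E (V - S) = 0"
proof (rule cnt_del_zero[OF bip fin _ S(1)])
  show "card (V \<inter> A) = card (V \<inter> B)" by (rule cnt_pos_bal[OF bip p])
  show "card (S \<inter> A) \<noteq> card (S \<inter> B)" using S by simp
qed


lemma caseI:
  assumes bipE: "\<forall>e\<in>E1 \<union> E2. card (e \<inter> A) = 1 \<and> card (e \<inter> B) = 1" and AB: "A \<inter> B = {}"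
    and ok1: "tn_ok V1 E1" and ok2: "tn_ok V2 E2" and V12: "V1 \<inter> V2 = {}"
    and LT: "Lab V1 E1 a1 a2 b1 b2" and LH: "Lab V2 E2 c1 c2 d1 d2"
    and cls: "a1 \<in> A" "a2 \<in> A" "b1 \<in> B" "b2 \<in> B" "c1 \<in> A" "c2 \<in> A" "d1 \<in> B" "d2 \<in> B"
  shows "Lab (V1 \<union> V2) (E1 \<union> E2 \<union> {{a1,d1},{a2,d2}}) c1 c2 b1 b2"
proof -
  define E where "E = E1 \<union> E2 \<union> {{a1,d1},{a2,d2}}"
  define V where "V = V1 \<union> V2"
  note f1 = tn_facts[OF ok1] and f2 = tn_facts[OF ok2]
  have bip1: "\<forall>e\<in>E1. card (e \<inter> A) = 1 \<and> card (e \<inter> B) = 1" using bipE by auto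
  have bip2: "\<forall>e\<in>E2. card (e \<inter> A) = 1 \<and> card (e \<inter> B) = 1" using bipE by auto
  have cT: "corners V1 E1 = {a1,a2,b1,b2}" "a1 \<noteq> a2" "b1 \<noteq> b2" using LT unfolding Lab_def by auto
  have cH: "corners V2 E2 = {c1,c2,d1,d2}" "c1 \<noteq> c2" "d1 \<noteq> d2" using LH unfolding Lab_def by auto
  have inV: "a1 \<in> V1" "a2 \<in> V1" "b1 \<in> V1" "b2 \<in> V1" "c1 \<in> V2" "c2 \<in> V2" "d1 \<in> V2" "d2 \<in> V2"
    using cT(1) cH(1) unfolding corners_def by auto
  have nA: "b1 \<notin> A" "b2 \<notin> A" "d1 \<notin> A" "d2 \<notin> A" using cls AB by auto
  have nB: "a1 \<notin> B" "a2 \<notin> B" "c1 \<notin> B" "c2 \<notin> B" using cls AB by auto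
  have nV: "c1 \<notin> V1" "c2 \<notin> V1" "d1 \<notin> V1" "d2 \<notin> V1" "a1 \<notin> V2" "a2 \<notin> V2" "b1 \<notin> V2" "b2 \<notin> V2"
    using inV V12 by auto
  have pT: "1 \<le> cnt E1 V1" by (rule Lab_p[OF LT])
  have pH: "1 \<le> cnt E2 V2" by (rule Lab_p[OF LH])
  have Z1: "cnt E1 (V1 - S) = 0" if "S \<subseteq> V1" "S \<inter> A = SA" "S \<inter> B = SB" "card SA \<noteq> card SB" for S SA SB
    by (rule Z_lemma[OF bip1 f1(1) pT that])
  have J: "cnt E X = cnt E1 (X\<inter>V1) * cnt E2 (X\<inter>V2)
    + (if a1\<in>X \<and> d1\<in>X then cnt E1 (X\<inter>V1 - {a1}) * cnt E2 (X\<inter>V2 - {d1}) else 0)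
    + (if a2\<in>X \<and> d2\<in>X then cnt E1 (X\<inter>V1 - {a2}) * cnt E2 (X\<inter>V2 - {d2}) else 0)
    + (if a1\<in>X \<and> d1\<in>X \<and> a2\<in>X \<and> d2\<in>X then cnt E1 (X\<inter>V1 - {a1,a2}) * cnt E2 (X\<inter>V2 - {d1,d2}) else 0)"
    if "X \<subseteq> V1 \<union> V2" for X
    unfolding E_def by (rule cnt_join[OF V12 f1(3) f2(3) inV(1,2) cT(2) inV(7,8) cH(3) that f1(2) f2(2)])
  have mG: "cnt E (V - {x,y}) = cnt E1 (V1 - {a1,y}) * cnt E2 (V2 - {x,d1}) + cnt E1 (V1 - {a2,y}) * cnt E2 (V2 - {x,d2})"
    if x: "x \<in> V2" "x \<in> A" and y: "y \<in> V1" "y \<in> B" for x y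
  proof -
    have s1: "(V - {x,y}) \<inter> V1 = V1 - {y}" "(V - {x,y}) \<inter> V2 = V2 - {x}" unfolding V_def using x y V12 by auto
    have mem: "a1 \<in> V - {x,y}" "a2 \<in> V - {x,y}" "d1 \<in> V - {x,y}" "d2 \<in> V - {x,y}"
      unfolding V_def using inV nV x y nA nB cls by auto
    have z1: "cnt E1 (V1 - {y}) = 0" by (rule Z1[of _ "{}" "{y}"]) (use y nB AB cls nA nB in auto)
    have e4: "V1 - {y} - {a1,a2} = V1 - {y,a1,a2}" by auto
    have z4: "cnt E1 (V1 - {y,a1,a2}) = 0"
      by (rule Z1[of _ "{a1,a2}" "{y}"]) (use y nB nA inV cls cT(2) AB cls nA nB in auto)
    have e2: "V1 - {y} - {a1} = V1 - {a1,y}" "V1 - {y} - {a2} = V1 - {a2,y}"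
      "V2 - {x} - {d1} = V2 - {x,d1}" "V2 - {x} - {d2} = V2 - {x,d2}" by auto
    have "V - {x,y} \<subseteq> V1 \<union> V2" unfolding V_def by auto
    from J[OF this] show ?thesis unfolding s1 using mem z1 z4 e2 e4 by simp
  qed
  have zG: "cnt E (V - {c1,c2,b1,b2}) = cnt E1 (V1 - {a1,a2,b1,b2}) * cnt E2 (V2 - {c1,c2,d1,d2})"
  proof -
    have s1: "(V - {c1,c2,b1,b2}) \<inter> V1 = V1 - {b1,b2}" "(V - {c1,c2,b1,b2}) \<inter> V2 = V2 - {c1,c2}"
      unfolding V_def using inV nV by auto
    have mem: "a1 \<in> V - {c1,c2,b1,b2}" "a2 \<in> V - {c1,c2,b1,b2}" "d1 \<in> V - {c1,c2,b1,b2}" "d2 \<in> V - {c1,c2,b1,b2}"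
      unfolding V_def using inV nV nA nB cls by auto
    have z1: "cnt E1 (V1 - {b1,b2}) = 0" by (rule Z1[of _ "{}" "{b1,b2}"]) (use inV nA cT(3) AB cls nA nB in auto)
    have e2: "V1 - {b1,b2} - {a1} = V1 - {a1,b1,b2}" "V1 - {b1,b2} - {a2} = V1 - {a2,b1,b2}"
      "V1 - {b1,b2} - {a1,a2} = V1 - {a1,a2,b1,b2}" "V2 - {c1,c2} - {d1,d2} = V2 - {c1,c2,d1,d2}" by auto
    have z2: "cnt E1 (V1 - {a1,b1,b2}) = 0" by (rule Z1[of _ "{a1}" "{b1,b2}"]) (use inV nA nB cls cT(3) AB cls nA nB in auto)
    have z3: "cnt E1 (V1 - {a2,b1,b2}) = 0" by (rule Z1[of _ "{a2}" "{b1,b2}"]) (use inV nA nB cls cT(3) AB cls nA nB in auto)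
    have "V - {c1,c2,b1,b2} \<subseteq> V1 \<union> V2" unfolding V_def by auto
    from J[OF this] show ?thesis unfolding s1 using mem z1 z2 z3 e2 by simp
  qed
  have pG: "cnt E V = cnt E1 V1 * cnt E2 V2"
  proof -
    have s1: "V \<inter> V1 = V1" "V \<inter> V2 = V2" unfolding V_def by auto
    have z1: "cnt E1 (V1 - {a1}) = 0" by (rule Z1[of _ "{a1}" "{}"]) (use inV nB cls AB cls nA nB in auto)
    have z2: "cnt E1 (V1 - {a2}) = 0" by (rule Z1[of _ "{a2}" "{}"]) (use inV nB cls AB cls nA nB in auto)
    have z3: "cnt E1 (V1 - {a1,a2}) = 0" by (rule Z1[of _ "{a1,a2}" "{}"]) (use inV nB cls cT(2) AB cls nA nB in auto)
    have "V \<subseteq> V1 \<union> V2" unfolding V_def by auto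
    from J[OF this] show ?thesis unfolding s1 using z1 z2 z3 by simp
  qed
  have corn: "corners V E = {c1,c2,b1,b2}"
  proof -
    have "a1 \<in> corners V1 E1" "a2 \<in> corners V1 E1" "d1 \<in> corners V2 E2" "d2 \<in> corners V2 E2"
      using cT cH by auto
    from corners_join[OF ok1 ok2 V12 this(1,2) cT(2) this(3,4) cH(3)]
    have "corners V E = (corners V1 E1 - {a1,a2}) \<union> (corners V2 E2 - {d1,d2})" unfolding E_def V_def .
    also have "\<dots> = {c1,c2,b1,b2}" unfolding cT(1) cH(1) using nA nB cls by auto
    finally show ?thesis .
  qed
  have cardV: "card V = card V1 + card V2" unfolding V_def using f1(1) f2(1) V12 by (simp add: card_Un_disjoint)
  have NT: "NI (int (cnt E1 (V1 - {a1,b1}))) (int (cnt E1 (V1 - {a1,b2}))) (int (cnt E1 (V1 - {a2,b1}))) (int (cnt E1 (V1 - {a2,b2})))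
        (int (cnt E1 (V1 - {a1,a2,b1,b2}))) (int (cnt E1 V1)) (card V1)" by (rule Lab_NI[OF LT])
  have NH: "NI (int (cnt E2 (V2 - {c1,d1}))) (int (cnt E2 (V2 - {c1,d2}))) (int (cnt E2 (V2 - {c2,d1}))) (int (cnt E2 (V2 - {c2,d2})))
        (int (cnt E2 (V2 - {c1,c2,d1,d2}))) (int (cnt E2 V2)) (card V2)" by (rule Lab_NI[OF LH])
  have NG: "NI (int (cnt E (V - {c1,b1}))) (int (cnt E (V - {c1,b2}))) (int (cnt E (V - {c2,b1}))) (int (cnt E (V - {c2,b2})))
        (int (cnt E (V - {c1,c2,b1,b2}))) (int (cnt E V)) (card V)"
    using alg_I[OF NT NH] unfolding mG[OF inV(5) cls(5) inV(3) cls(3)] mG[OF inV(5) cls(5) inV(4) cls(4)]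
      mG[OF inV(6) cls(6) inV(3) cls(3)] mG[OF inV(6) cls(6) inV(4) cls(4)] zG pG cardV
    by (simp add: algebra_simps)
  show ?thesis unfolding Lab_def E_def[symmetric] V_def[symmetric] using NG corn cH(2) cT(3) by simp
qed


lemma caseII:
  assumes bipE: "\<forall>e\<in>E1 \<union> E2. card (e \<inter> A) = 1 \<and> card (e \<inter> B) = 1" and AB: "A \<inter> B = {}"
    and ok1: "tn_ok V1 E1" and ok2: "tn_ok V2 E2" and V12: "V1 \<inter> V2 = {}"
    and LT: "Lab V1 E1 a1 a2 b1 b2" and LH: "Lab V2 E2 c1 c2 d1 d2"
    and cls: "a1 \<in> A" "a2 \<in> A" "b1 \<in> B" "b2 \<in> B" "c1 \<in> A" "c2 \<in> A" "d1 \<in> B" "d2 \<in> B"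
  shows "Lab (V1 \<union> V2) (E1 \<union> E2 \<union> {{a1,d1},{b1,c1}}) a2 c2 b2 d2"
proof -
  define E where "E = E1 \<union> E2 \<union> {{a1,d1},{b1,c1}}"
  define V where "V = V1 \<union> V2"
  note f1 = tn_facts[OF ok1] and f2 = tn_facts[OF ok2]
  have bip1: "\<forall>e\<in>E1. card (e \<inter> A) = 1 \<and> card (e \<inter> B) = 1" using bipE by auto
  have cT: "corners V1 E1 = {a1,a2,b1,b2}" "a1 \<noteq> a2" "b1 \<noteq> b2" using LT unfolding Lab_def by auto
  have cH: "corners V2 E2 = {c1,c2,d1,d2}" "c1 \<noteq> c2" "d1 \<noteq> d2" using LH unfolding Lab_def by auto
  have inV: "a1 \<in> V1" "a2 \<in> V1" "b1 \<in> V1" "b2 \<in> V1" "c1 \<in> V2" "c2 \<in> V2" "d1 \<in> V2" "d2 \<in> V2"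
    using cT(1) cH(1) unfolding corners_def by auto
  have nA: "b1 \<notin> A" "b2 \<notin> A" "d1 \<notin> A" "d2 \<notin> A" using cls AB by auto
  have nB: "a1 \<notin> B" "a2 \<notin> B" "c1 \<notin> B" "c2 \<notin> B" using cls AB by auto
  have nV: "c1 \<notin> V1" "c2 \<notin> V1" "d1 \<notin> V1" "d2 \<notin> V1" "a1 \<notin> V2" "a2 \<notin> V2" "b1 \<notin> V2" "b2 \<notin> V2"
    using inV V12 by auto
  have ne: "a1 \<noteq> b1" "d1 \<noteq> c1" using nA cls by auto
  have pT: "1 \<le> cnt E1 V1" by (rule Lab_p[OF LT])
  have Z1: "cnt E1 X = 0" if "X = V1 - S" "S \<subseteq> V1" "S \<inter> A = SA" "S \<inter> B = SB" "card SA \<noteq> card SB" for X S SA SB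
    unfolding that(1) by (rule Z_lemma[OF bip1 f1(1) pT that(2-5)])
  have J: "cnt E X = cnt E1 (X\<inter>V1) * cnt E2 (X\<inter>V2)
    + (if a1\<in>X \<and> d1\<in>X then cnt E1 (X\<inter>V1 - {a1}) * cnt E2 (X\<inter>V2 - {d1}) else 0)
    + (if b1\<in>X \<and> c1\<in>X then cnt E1 (X\<inter>V1 - {b1}) * cnt E2 (X\<inter>V2 - {c1}) else 0)
    + (if a1\<in>X \<and> d1\<in>X \<and> b1\<in>X \<and> c1\<in>X then cnt E1 (X\<inter>V1 - {a1,b1}) * cnt E2 (X\<inter>V2 - {d1,c1}) else 0)"
    if "X \<subseteq> V1 \<union> V2" for X
    unfolding E_def by (rule cnt_join[OF V12 f1(3) f2(3) inV(1,3) ne(1) inV(7,5) ne(2) that f1(2) f2(2)])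
  note facts = inV nV nA nB cls AB cT(2,3) cH(2,3)
  have m11: "cnt E (V - {a2,b2}) = cnt E1 (V1 - {a2,b2}) * cnt E2 V2 + cnt E1 (V1 - {a1,a2,b1,b2}) * cnt E2 (V2 - {c1,d1})"
  proof -
    have s1: "(V - {a2,b2}) \<inter> V1 = V1 - {a2,b2}" "(V - {a2,b2}) \<inter> V2 = V2" unfolding V_def using facts by auto
    have mem: "a1 \<in> V - {a2,b2}" "d1 \<in> V - {a2,b2}" "b1 \<in> V - {a2,b2}" "c1 \<in> V - {a2,b2}"
      unfolding V_def using facts by auto
    have z2: "cnt E1 (V1 - {a2,b2} - {a1}) = 0" by (rule Z1[of _ "{a2,a1,b2}" "{a2,a1}" "{b2}"]) (use facts in auto)
    have z3: "cnt E1 (V1 - {a2,b2} - {b1}) = 0" by (rule Z1[of _ "{a2,b2,b1}" "{a2}" "{b2,b1}"]) (use facts in auto)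
    have e: "V1 - {a2,b2} - {a1,b1} = V1 - {a1,a2,b1,b2}" "V2 - {d1,c1} = V2 - {c1,d1}" by auto
    have "V - {a2,b2} \<subseteq> V1 \<union> V2" unfolding V_def by auto
    from J[OF this] show ?thesis unfolding s1 using mem z2 z3 e by simp
  qed
  have m12: "cnt E (V - {a2,d2}) = cnt E1 (V1 - {a2,b1}) * cnt E2 (V2 - {c1,d2})"
  proof -
    have s1: "(V - {a2,d2}) \<inter> V1 = V1 - {a2}" "(V - {a2,d2}) \<inter> V2 = V2 - {d2}" unfolding V_def using facts by auto
    have mem: "a1 \<in> V - {a2,d2}" "d1 \<in> V - {a2,d2}" "b1 \<in> V - {a2,d2}" "c1 \<in> V - {a2,d2}"
      unfolding V_def using facts by auto
    have z1: "cnt E1 (V1 - {a2}) = 0" by (rule Z1[of _ "{a2}" "{a2}" "{}"]) (use facts in auto)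
    have z2: "cnt E1 (V1 - {a2} - {a1}) = 0" by (rule Z1[of _ "{a2,a1}" "{a2,a1}" "{}"]) (use facts in auto)
    have z4: "cnt E1 (V1 - {a2} - {a1,b1}) = 0" by (rule Z1[of _ "{a2,a1,b1}" "{a2,a1}" "{b1}"]) (use facts in auto)
    have e: "V1 - {a2} - {b1} = V1 - {a2,b1}" "V2 - {d2} - {c1} = V2 - {c1,d2}" by auto
    have "V - {a2,d2} \<subseteq> V1 \<union> V2" unfolding V_def by auto
    from J[OF this] show ?thesis unfolding s1 using mem z1 z2 z4 e by simp
  qed
  have m21: "cnt E (V - {c2,b2}) = cnt E1 (V1 - {a1,b2}) * cnt E2 (V2 - {c2,d1})"
  proof -
    have s1: "(V - {c2,b2}) \<inter> V1 = V1 - {b2}" "(V - {c2,b2}) \<inter> V2 = V2 - {c2}" unfolding V_def using facts by auto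
    have mem: "a1 \<in> V - {c2,b2}" "d1 \<in> V - {c2,b2}" "b1 \<in> V - {c2,b2}" "c1 \<in> V - {c2,b2}"
      unfolding V_def using facts by auto
    have z1: "cnt E1 (V1 - {b2}) = 0" by (rule Z1[of _ "{b2}" "{}" "{b2}"]) (use facts in auto)
    have z3: "cnt E1 (V1 - {b2} - {b1}) = 0" by (rule Z1[of _ "{b2,b1}" "{}" "{b2,b1}"]) (use facts in auto)
    have z4: "cnt E1 (V1 - {b2} - {a1,b1}) = 0" by (rule Z1[of _ "{a1,b2,b1}" "{a1}" "{b2,b1}"]) (use facts in auto)
    have e: "V1 - {b2} - {a1} = V1 - {a1,b2}" "V2 - {c2} - {d1} = V2 - {c2,d1}" by auto
    have "V - {c2,b2} \<subseteq> V1 \<union> V2" unfolding V_def by auto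
    from J[OF this] show ?thesis unfolding s1 using mem z1 z3 z4 e by simp
  qed
  have m22: "cnt E (V - {c2,d2}) = cnt E1 V1 * cnt E2 (V2 - {c2,d2}) + cnt E1 (V1 - {a1,b1}) * cnt E2 (V2 - {c1,c2,d1,d2})"
  proof -
    have s1: "(V - {c2,d2}) \<inter> V1 = V1" "(V - {c2,d2}) \<inter> V2 = V2 - {c2,d2}" unfolding V_def using facts by auto
    have mem: "a1 \<in> V - {c2,d2}" "d1 \<in> V - {c2,d2}" "b1 \<in> V - {c2,d2}" "c1 \<in> V - {c2,d2}"
      unfolding V_def using facts by auto
    have z2: "cnt E1 (V1 - {a1}) = 0" by (rule Z1[of _ "{a1}" "{a1}" "{}"]) (use facts in auto)
    have z3: "cnt E1 (V1 - {b1}) = 0" by (rule Z1[of _ "{b1}" "{}" "{b1}"]) (use facts in auto)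
    have e: "V2 - {c2,d2} - {d1,c1} = V2 - {c1,c2,d1,d2}" by auto
    have "V - {c2,d2} \<subseteq> V1 \<union> V2" unfolding V_def by auto
    from J[OF this] show ?thesis unfolding s1 using mem z2 z3 e by simp
  qed
  have zG: "cnt E (V - {a2,c2,b2,d2}) = cnt E1 (V1 - {a2,b2}) * cnt E2 (V2 - {c2,d2}) + cnt E1 (V1 - {a1,a2,b1,b2}) * cnt E2 (V2 - {c1,c2,d1,d2})"
  proof -
    have s1: "(V - {a2,c2,b2,d2}) \<inter> V1 = V1 - {a2,b2}" "(V - {a2,c2,b2,d2}) \<inter> V2 = V2 - {c2,d2}" unfolding V_def using facts by auto
    have mem: "a1 \<in> V - {a2,c2,b2,d2}" "d1 \<in> V - {a2,c2,b2,d2}" "b1 \<in> V - {a2,c2,b2,d2}" "c1 \<in> V - {a2,c2,b2,d2}"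
      unfolding V_def using facts by auto
    have z2: "cnt E1 (V1 - {a2,b2} - {a1}) = 0" by (rule Z1[of _ "{a2,a1,b2}" "{a2,a1}" "{b2}"]) (use facts in auto)
    have z3: "cnt E1 (V1 - {a2,b2} - {b1}) = 0" by (rule Z1[of _ "{a2,b2,b1}" "{a2}" "{b2,b1}"]) (use facts in auto)
    have e: "V1 - {a2,b2} - {a1,b1} = V1 - {a1,a2,b1,b2}" "V2 - {c2,d2} - {d1,c1} = V2 - {c1,c2,d1,d2}" by auto
    have "V - {a2,c2,b2,d2} \<subseteq> V1 \<union> V2" unfolding V_def by auto
    from J[OF this] show ?thesis unfolding s1 using mem z2 z3 e by simp
  qed
  have pG: "cnt E V = cnt E1 V1 * cnt E2 V2 + cnt E1 (V1 - {a1,b1}) * cnt E2 (V2 - {c1,d1})"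
  proof -
    have s1: "V \<inter> V1 = V1" "V \<inter> V2 = V2" unfolding V_def by auto
    have mem: "a1 \<in> V" "d1 \<in> V" "b1 \<in> V" "c1 \<in> V" unfolding V_def using facts by auto
    have z2: "cnt E1 (V1 - {a1}) = 0" by (rule Z1[of _ "{a1}" "{a1}" "{}"]) (use facts in auto)
    have z3: "cnt E1 (V1 - {b1}) = 0" by (rule Z1[of _ "{b1}" "{}" "{b1}"]) (use facts in auto)
    have e: "V2 - {d1,c1} = V2 - {c1,d1}" by auto
    have "V \<subseteq> V1 \<union> V2" unfolding V_def by auto
    from J[OF this] show ?thesis unfolding s1 using mem z2 z3 e by simp
  qed
  have corn: "corners V E = {a2,c2,b2,d2}"
  proof -
    have "a1 \<in> corners V1 E1" "b1 \<in> corners V1 E1" "d1 \<in> corners V2 E2" "c1 \<in> corners V2 E2"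
      using cT cH by auto
    from corners_join[OF ok1 ok2 V12 this(1,2) ne(1) this(3,4) ne(2)]
    have "corners V E = (corners V1 E1 - {a1,b1}) \<union> (corners V2 E2 - {d1,c1})" unfolding E_def V_def .
    also have "\<dots> = {a2,c2,b2,d2}" unfolding cT(1) cH(1) using facts by auto
    finally show ?thesis .
  qed
  have cardV: "card V = card V1 + card V2" unfolding V_def using f1(1) f2(1) V12 by (simp add: card_Un_disjoint)
  have NT: "NI (int (cnt E1 (V1 - {a1,b1}))) (int (cnt E1 (V1 - {a1,b2}))) (int (cnt E1 (V1 - {a2,b1}))) (int (cnt E1 (V1 - {a2,b2})))
        (int (cnt E1 (V1 - {a1,a2,b1,b2}))) (int (cnt E1 V1)) (card V1)" by (rule Lab_NI[OF LT])
  have NH: "NI (int (cnt E2 (V2 - {c1,d1}))) (int (cnt E2 (V2 - {c1,d2}))) (int (cnt E2 (V2 - {c2,d1}))) (int (cnt E2 (V2 - {c2,d2})))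
        (int (cnt E2 (V2 - {c1,c2,d1,d2}))) (int (cnt E2 V2)) (card V2)" by (rule Lab_NI[OF LH])
  have NG: "NI (int (cnt E (V - {a2,b2}))) (int (cnt E (V - {a2,d2}))) (int (cnt E (V - {c2,b2}))) (int (cnt E (V - {c2,d2})))
        (int (cnt E (V - {a2,c2,b2,d2}))) (int (cnt E V)) (card V)"
    using alg_II[OF NT NH] unfolding m11 m12 m21 m22 zG pG cardV
    by (simp add: algebra_simps)
  have cd: "a2 \<noteq> c2" "b2 \<noteq> d2" using facts by auto
  show ?thesis unfolding Lab_def E_def[symmetric] V_def[symmetric] using NG corn cd by simp
qed


lemma caseE:
  assumes bip1: "\<forall>e\<in>E1. card (e \<inter> A) = 1 \<and> card (e \<inter> B) = 1" and AB: "A \<inter> B = {}"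
    and ok1: "tn_ok V1 E1" and ab: "a \<noteq> b" "a \<notin> V1" "b \<notin> V1"
    and LT: "Lab V1 E1 a1 a2 b1 b2"
    and cls: "a1 \<in> A" "a2 \<in> A" "b1 \<in> B" "b2 \<in> B" "a \<in> B" "b \<in> A"
  shows "Lab (V1 \<union> {a,b}) (E1 \<union> {{a,b}} \<union> {{a1,a},{b1,b}}) a2 b b2 a"
proof -
  define E where "E = E1 \<union> {{a,b}} \<union> {{a1,a},{b1,b}}"
  define V where "V = V1 \<union> {a,b}"
  note f1 = tn_facts[OF ok1]
  have cT: "corners V1 E1 = {a1,a2,b1,b2}" "a1 \<noteq> a2" "b1 \<noteq> b2" using LT unfolding Lab_def by auto
  have inV: "a1 \<in> V1" "a2 \<in> V1" "b1 \<in> V1" "b2 \<in> V1"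
    using cT(1) unfolding corners_def by auto
  have nA: "b1 \<notin> A" "b2 \<notin> A" "a \<notin> A" using cls AB by auto
  have nB: "a1 \<notin> B" "a2 \<notin> B" "b \<notin> B" using cls AB by auto
  have V12: "V1 \<inter> {a,b} = {}" using ab by auto
  have ne: "a1 \<noteq> b1" using nA cls by auto
  have E2: "\<forall>e\<in>{{a,b}}. e \<subseteq> {a,b} \<and> e \<noteq> {}" by auto
  have c2: "cnt {{a,b}} {a,b} = 1" "cnt {{a,b}} {} = 1" "cnt {{a,b}} {a} = 0" "cnt {{a,b}} {b} = 0"
    using cnt_edge2[OF ab(1)] cnt_edge1[OF ab(1)] cnt_empty_set[OF E2[THEN ball_conj_distrib[THEN iffD1], THEN conjunct2]]
    by auto
  have pT: "1 \<le> cnt E1 V1" by (rule Lab_p[OF LT])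
  have Z1: "cnt E1 X = 0" if "X = V1 - S" "S \<subseteq> V1" "S \<inter> A = SA" "S \<inter> B = SB" "card SA \<noteq> card SB" for X S SA SB
    unfolding that(1) by (rule Z_lemma[OF bip1 f1(1) pT that(2-5)])
  have J: "cnt E X = cnt E1 (X\<inter>V1) * cnt {{a,b}} (X\<inter>{a,b})
    + (if a1\<in>X \<and> a\<in>X then cnt E1 (X\<inter>V1 - {a1}) * cnt {{a,b}} (X\<inter>{a,b} - {a}) else 0)
    + (if b1\<in>X \<and> b\<in>X then cnt E1 (X\<inter>V1 - {b1}) * cnt {{a,b}} (X\<inter>{a,b} - {b}) else 0)
    + (if a1\<in>X \<and> a\<in>X \<and> b1\<in>X \<and> b\<in>X then cnt E1 (X\<inter>V1 - {a1,b1}) * cnt {{a,b}} (X\<inter>{a,b} - {a,b}) else 0)"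
    if "X \<subseteq> V1 \<union> {a,b}" for X
    unfolding E_def by (rule cnt_join[OF V12 f1(3) E2 inV(1,3) ne _ _ ab(1) that f1(2)]) auto
  note facts = inV nA nB cls AB cT(2,3) ab
  have m11: "cnt E (V - {a2,b2}) = cnt E1 (V1 - {a2,b2}) + cnt E1 (V1 - {a1,a2,b1,b2})"
  proof -
    have s1: "(V - {a2,b2}) \<inter> V1 = V1 - {a2,b2}" "(V - {a2,b2}) \<inter> {a,b} = {a,b}" unfolding V_def using facts by auto
    have mem: "a1 \<in> V - {a2,b2}" "a \<in> V - {a2,b2}" "b1 \<in> V - {a2,b2}" "b \<in> V - {a2,b2}"
      unfolding V_def using facts by auto
    have z2: "cnt E1 (V1 - {a2,b2} - {a1}) = 0" by (rule Z1[of _ "{a2,b2,a1}" "{a2,a1}" "{b2}"]) (use facts in auto)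
    have z3: "cnt E1 (V1 - {a2,b2} - {b1}) = 0" by (rule Z1[of _ "{a2,b2,b1}" "{a2}" "{b2,b1}"]) (use facts in auto)
    have e: "V1 - {a2,b2} - {a1,b1} = V1 - {a1,a2,b1,b2}" "{a,b} - {a,b} = {}" by auto
    have "V - {a2,b2} \<subseteq> V1 \<union> {a,b}" unfolding V_def by auto
    from J[OF this] show ?thesis unfolding s1 using mem z2 z3 e c2 by simp
  qed
  have m12: "cnt E (V - {a2,a}) = cnt E1 (V1 - {a2,b1})"
  proof -
    have s1: "(V - {a2,a}) \<inter> V1 = V1 - {a2}" "(V - {a2,a}) \<inter> {a,b} = {b}" unfolding V_def using facts by auto
    have mem: "a \<notin> V - {a2,a}" "b1 \<in> V - {a2,a}" "b \<in> V - {a2,a}"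
      unfolding V_def using facts by auto
    have e: "V1 - {a2} - {b1} = V1 - {a2,b1}" "{b} - {b} = {}" by auto
    have "V - {a2,a} \<subseteq> V1 \<union> {a,b}" unfolding V_def by auto
    from J[OF this] show ?thesis unfolding s1 using mem e c2 by simp
  qed
  have m21: "cnt E (V - {b,b2}) = cnt E1 (V1 - {a1,b2})"
  proof -
    have s1: "(V - {b,b2}) \<inter> V1 = V1 - {b2}" "(V - {b,b2}) \<inter> {a,b} = {a}" unfolding V_def using facts by auto
    have mem: "a1 \<in> V - {b,b2}" "a \<in> V - {b,b2}" "b \<notin> V - {b,b2}"
      unfolding V_def using facts by auto
    have e: "V1 - {b2} - {a1} = V1 - {a1,b2}" "{a} - {a} = {}" by auto
    have "V - {b,b2} \<subseteq> V1 \<union> {a,b}" unfolding V_def by auto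
    from J[OF this] show ?thesis unfolding s1 using mem e c2 by simp
  qed
  have m22: "cnt E (V - {b,a}) = cnt E1 V1"
  proof -
    have s1: "(V - {b,a}) \<inter> V1 = V1" "(V - {b,a}) \<inter> {a,b} = {}" unfolding V_def using facts by auto
    have mem: "a \<notin> V - {b,a}" "b \<notin> V - {b,a}" by auto
    have "V - {b,a} \<subseteq> V1 \<union> {a,b}" unfolding V_def by auto
    from J[OF this] show ?thesis unfolding s1 using mem c2 by simp
  qed
  have zG: "cnt E (V - {a2,b,b2,a}) = cnt E1 (V1 - {a2,b2})"
  proof -
    have s1: "(V - {a2,b,b2,a}) \<inter> V1 = V1 - {a2,b2}" "(V - {a2,b,b2,a}) \<inter> {a,b} = {}" unfolding V_def using facts by auto
    have mem: "a \<notin> V - {a2,b,b2,a}" "b \<notin> V - {a2,b,b2,a}" by auto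
    have "V - {a2,b,b2,a} \<subseteq> V1 \<union> {a,b}" unfolding V_def by auto
    from J[OF this] show ?thesis unfolding s1 using mem c2 by simp
  qed
  have pG: "cnt E V = cnt E1 V1 + cnt E1 (V1 - {a1,b1})"
  proof -
    have s1: "V \<inter> V1 = V1" "V \<inter> {a,b} = {a,b}" unfolding V_def by auto
    have mem: "a1 \<in> V" "a \<in> V" "b1 \<in> V" "b \<in> V" unfolding V_def using facts by auto
    have z2: "cnt E1 (V1 - {a1}) = 0" by (rule Z1[of _ "{a1}" "{a1}" "{}"]) (use facts in auto)
    have z3: "cnt E1 (V1 - {b1}) = 0" by (rule Z1[of _ "{b1}" "{}" "{b1}"]) (use facts in auto)
    have e: "{a,b} - {a,b} = {}" by auto
    have "V \<subseteq> V1 \<union> {a,b}" unfolding V_def by auto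
    from J[OF this] show ?thesis unfolding s1 using mem z2 z3 e c2 by simp
  qed
  have corn: "corners V E = {a2,b,b2,a}"
  proof -
    have "a1 \<in> corners V1 E1" "b1 \<in> corners V1 E1" using cT by auto
    from corners_edge[OF ok1 ab this ne]
    have "corners V E = (corners V1 E1 - {a1,b1}) \<union> {a,b}" unfolding E_def V_def .
    also have "\<dots> = {a2,b,b2,a}" unfolding cT(1) using facts by auto
    finally show ?thesis .
  qed
  have cardV: "card V = card V1 + 2" unfolding V_def using f1(1) V12 ab by (simp add: card_Un_disjoint)
  have NT: "NI (int (cnt E1 (V1 - {a1,b1}))) (int (cnt E1 (V1 - {a1,b2}))) (int (cnt E1 (V1 - {a2,b1}))) (int (cnt E1 (V1 - {a2,b2})))
        (int (cnt E1 (V1 - {a1,a2,b1,b2}))) (int (cnt E1 V1)) (card V1)" by (rule Lab_NI[OF LT])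
  have NG: "NI (int (cnt E (V - {a2,b2}))) (int (cnt E (V - {a2,a}))) (int (cnt E (V - {b,b2}))) (int (cnt E (V - {b,a})))
        (int (cnt E (V - {a2,b,b2,a}))) (int (cnt E V)) (card V)"
    using alg_E[OF NT] unfolding m11 m12 m21 m22 zG pG cardV
    by (simp add: algebra_simps)
  have cd: "a2 \<noteq> b" "b2 \<noteq> a" using facts by auto
  show ?thesis unfolding Lab_def E_def[symmetric] V_def[symmetric] using NG corn cd by simp
qed


lemma case_cycle:
  assumes dist: "distinct [a,b,c,d]"
  shows "Lab {a,b,c,d} {{a,b},{b,c},{c,d},{d,a}} a c b d"
proof -
  have dd: "a \<noteq> b" "a \<noteq> c" "a \<noteq> d" "b \<noteq> c" "b \<noteq> d" "c \<noteq> d" using dist by auto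
  define E where "E = {{a,b},{b,c},{c,d},{d,a}}"
  define V where "V = {a,b,c,d}"
  have EE: "E = {{a,b}} \<union> {{c,d}} \<union> {{b,c},{a,d}}" unfolding E_def by (auto simp: insert_commute)
  have E1: "\<forall>e\<in>{{a,b}}. e \<subseteq> {a,b} \<and> e \<noteq> {}" and E2: "\<forall>e\<in>{{c,d}}. e \<subseteq> {c,d} \<and> e \<noteq> {}" by auto
  have V12: "{a,b} \<inter> {c,d} = {}" using dd by auto
  have J: "cnt E X = cnt {{a,b}} (X\<inter>{a,b}) * cnt {{c,d}} (X\<inter>{c,d})
    + (if b\<in>X \<and> c\<in>X then cnt {{a,b}} (X\<inter>{a,b} - {b}) * cnt {{c,d}} (X\<inter>{c,d} - {c}) else 0)
    + (if a\<in>X \<and> d\<in>X then cnt {{a,b}} (X\<inter>{a,b} - {a}) * cnt {{c,d}} (X\<inter>{c,d} - {d}) else 0)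
    + (if b\<in>X \<and> c\<in>X \<and> a\<in>X \<and> d\<in>X then cnt {{a,b}} (X\<inter>{a,b} - {b,a}) * cnt {{c,d}} (X\<inter>{c,d} - {c,d}) else 0)"
    if "X \<subseteq> {a,b} \<union> {c,d}" for X
    unfolding EE by (rule cnt_join[OF V12 E1 E2 _ _ _ _ _ _ that]) (use dd in auto)
  have c1: "cnt {{a,b}} {a,b} = 1" "cnt {{a,b}} {} = 1" "cnt {{a,b}} {a} = 0" "cnt {{a,b}} {b} = 0"
    using cnt_edge2[OF dd(1)] cnt_edge1[OF dd(1)] cnt_empty_set[of "{{a,b}}"] by auto
  have c2: "cnt {{c,d}} {c,d} = 1" "cnt {{c,d}} {} = 1" "cnt {{c,d}} {c} = 0" "cnt {{c,d}} {d} = 0"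
    using cnt_edge2[OF dd(6)] cnt_edge1[OF dd(6)] cnt_empty_set[of "{{c,d}}"] by auto
  have sub: "X \<subseteq> {a,b} \<union> {c,d}" if "X \<subseteq> V" for X using that unfolding V_def by auto
  have m11: "cnt E (V - {a,b}) = 1"
  proof -
    have s: "(V - {a,b}) \<inter> {a,b} = {}" "(V - {a,b}) \<inter> {c,d} = {c,d}" "b \<notin> V - {a,b}" "a \<notin> V - {a,b}"
      unfolding V_def using dd by auto
    show ?thesis using J[OF sub] s c1 c2 by simp
  qed
  have m12: "cnt E (V - {a,d}) = 1"
  proof -
    have s: "(V - {a,d}) \<inter> {a,b} = {b}" "(V - {a,d}) \<inter> {c,d} = {c}" "b \<in> V - {a,d}" "c \<in> V - {a,d}" "a \<notin> V - {a,d}"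
      "{b} - {b} = {}" "{c} - {c} = {}"
      unfolding V_def using dd by auto
    show ?thesis using J[OF sub] s c1 c2 by simp
  qed
  have m21: "cnt E (V - {c,b}) = 1"
  proof -
    have s: "(V - {c,b}) \<inter> {a,b} = {a}" "(V - {c,b}) \<inter> {c,d} = {d}" "a \<in> V - {c,b}" "d \<in> V - {c,b}" "b \<notin> V - {c,b}"
      "{a} - {a} = {}" "{d} - {d} = {}"
      unfolding V_def using dd by auto
    show ?thesis using J[OF sub] s c1 c2 by simp
  qed
  have m22: "cnt E (V - {c,d}) = 1"
  proof -
    have s: "(V - {c,d}) \<inter> {a,b} = {a,b}" "(V - {c,d}) \<inter> {c,d} = {}" "c \<notin> V - {c,d}" "d \<notin> V - {c,d}"
      unfolding V_def using dd by auto
    show ?thesis using J[OF sub] s c1 c2 by simp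
  qed
  have zz: "cnt E (V - {a,c,b,d}) = 1"
  proof -
    have s: "(V - {a,c,b,d}) \<inter> {a,b} = {}" "(V - {a,c,b,d}) \<inter> {c,d} = {}" "c \<notin> V - {a,c,b,d}" "d \<notin> V - {a,c,b,d}"
      unfolding V_def using dd by auto
    show ?thesis using J[OF sub] s c1 c2 by simp
  qed
  have pp: "cnt E V = 2"
  proof -
    have s: "V \<inter> {a,b} = {a,b}" "V \<inter> {c,d} = {c,d}" "a \<in> V" "b \<in> V" "c \<in> V" "d \<in> V"
      "{a,b} - {b} = {a}" "{c,d} - {c} = {d}" "{a,b} - {a} = {b}" "{c,d} - {d} = {c}" "{a,b} - {b,a} = {}" "{c,d} - {c,d} = {}"
      unfolding V_def using dd by auto
    show ?thesis using J[OF sub] s c1 c2 by simp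
  qed
  have corn: "corners V E = {a,c,b,d}"
  proof -
    have da: "{e \<in> E. a \<in> e} = {{a,b},{d,a}}" using dd unfolding E_def by auto
    have db: "{e \<in> E. b \<in> e} = {{a,b},{b,c}}" using dd unfolding E_def by auto
    have dc: "{e \<in> E. c \<in> e} = {{b,c},{c,d}}" using dd unfolding E_def by auto
    have dd': "{e \<in> E. d \<in> e} = {{c,d},{d,a}}" using dd unfolding E_def by auto
    have n: "{a,b} \<noteq> {d,a}" "{a,b} \<noteq> {b,c}" "{b,c} \<noteq> {c,d}" "{c,d} \<noteq> {d,a}" using dd by (auto simp: doubleton_eq_iff)
    have "degree E a = 2" "degree E b = 2" "degree E c = 2" "degree E d = 2"
      unfolding degree_def da db dc dd' using n by auto
    thus ?thesis unfolding corners_def V_def by auto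
  qed
  have cv: "card V = 4" unfolding V_def using dd by auto
  have NG: "NI (int (cnt E (V - {a,b}))) (int (cnt E (V - {a,d}))) (int (cnt E (V - {c,b}))) (int (cnt E (V - {c,d})))
        (int (cnt E (V - {a,c,b,d}))) (int (cnt E V)) (card V)"
    unfolding m11 m12 m21 m22 zz pp cv NI_def by simp
  show ?thesis unfolding Lab_def E_def[symmetric] V_def[symmetric] using NG corn dd by simp
qed


lemma bip_facts: "bipartition V E A B \<Longrightarrow> A \<union> B = V \<and> A \<inter> B = {} \<and> (\<forall>e\<in>E. card (e \<inter> A) = 1 \<and> card (e \<inter> B) = 1)"
  unfolding bipartition_def by auto

lemma bip_restrict:
  assumes "bipartition V E A B" "V1 \<subseteq> V" "E1 \<subseteq> E" "\<forall>e\<in>E1. e \<subseteq> V1"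
  shows "bipartition V1 E1 (A \<inter> V1) (B \<inter> V1)"
proof -
  have b: "A \<union> B = V" "A \<inter> B = {}" "\<forall>e\<in>E. card (e \<inter> A) = 1 \<and> card (e \<inter> B) = 1" using bip_facts[OF assms(1)] by auto
  have "\<forall>e\<in>E1. card (e \<inter> (A \<inter> V1)) = 1 \<and> card (e \<inter> (B \<inter> V1)) = 1"
  proof
    fix e assume e: "e \<in> E1"
    hence "e \<inter> (A \<inter> V1) = e \<inter> A" "e \<inter> (B \<inter> V1) = e \<inter> B" using assms(4) by auto
    thus "card (e \<inter> (A \<inter> V1)) = 1 \<and> card (e \<inter> (B \<inter> V1)) = 1" using b(3) e assms(3) by auto
  qed
  thus ?thesis unfolding bipartition_def using b assms(2) by auto
qed

lemma edge_cls:
  assumes "bipartition V E A B" "{x,y} \<in> E" "x \<noteq> y" "x \<in> V" "y \<in> V"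
  shows "(x \<in> A \<longrightarrow> y \<in> B) \<and> (x \<in> B \<longrightarrow> y \<in> A)"
proof -
  have b: "A \<union> B = V" "A \<inter> B = {}" "card ({x,y} \<inter> A) = 1" "card ({x,y} \<inter> B) = 1"
    using bip_facts[OF assms(1)] assms(2) by auto
  have 1: "y \<in> B" if "x \<in> A"
  proof (rule ccontr)
    assume "y \<notin> B"
    hence "y \<in> A" using b assms(5) by auto
    hence "{x,y} \<inter> A = {x,y}" using that by auto
    thus False using b(3) assms(3) by simp
  qed
  have 2: "y \<in> A" if "x \<in> B"
  proof (rule ccontr)
    assume "y \<notin> A"
    hence "y \<in> B" using b assms(5) by auto
    hence "{x,y} \<inter> B = {x,y}" using that by auto
    thus False using b(4) assms(3) by simp
  qed
  show ?thesis using 1 2 by auto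
qed

lemma pairA: assumes L: "Lab V E a1 a2 b1 b2" and x: "x \<in> {a1,a2}" shows "\<exists>y. y \<in> {a1,a2} \<and> Lab V E x y b1 b2"
proof (cases "x = a1")
  case True thus ?thesis using L by blast
next
  case False hence "x = a2" using x by auto
  thus ?thesis using Lab_swapA[OF L] by blast
qed

lemma pairB: assumes L: "Lab V E a1 a2 b1 b2" and x: "x \<in> {b1,b2}" shows "\<exists>y. y \<in> {b1,b2} \<and> Lab V E a1 a2 x y"
proof (cases "x = b1")
  case True thus ?thesis using L by blast
next
  case False hence "x = b2" using x by auto
  thus ?thesis using Lab_swapB[OF L] by blast
qed

lemma pairA2: "Lab V E a1 a2 b1 b2 \<Longrightarrow> x \<in> {a1,a2} \<Longrightarrow> y \<in> {a1,a2} \<Longrightarrow> x \<noteq> y \<Longrightarrow> Lab V E x y b1 b2"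
  using Lab_swapA by auto

lemma pairB2: "Lab V E a1 a2 b1 b2 \<Longrightarrow> x \<in> {b1,b2} \<Longrightarrow> y \<in> {b1,b2} \<Longrightarrow> x \<noteq> y \<Longrightarrow> Lab V E a1 a2 x y"
  using Lab_swapB by auto

definition Good :: "'a set \<Rightarrow> 'a set set \<Rightarrow> 'a set \<Rightarrow> 'a set \<Rightarrow> bool" where
  "Good V E A B \<longleftrightarrow> (\<exists>a1 a2 b1 b2. a1 \<in> A \<and> a2 \<in> A \<and> b1 \<in> B \<and> b2 \<in> B \<and> Lab V E a1 a2 b1 b2)"

lemma main_inv:
  assumes "twisted_net V E"
  shows "bipartition V E A B \<Longrightarrow> Good V E A B"
  using assms
proof (induction arbitrary: A B rule: twisted_net.induct)
  case (cycle4 a b c d)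
  note bp = cycle4.prems
  have dd: "a \<noteq> b" "a \<noteq> c" "a \<noteq> d" "b \<noteq> c" "b \<noteq> d" "c \<noteq> d" using cycle4.hyps by auto
  have V: "a \<in> A \<union> B" using bip_facts[OF bp] by auto
  have eab: "(a \<in> A \<longrightarrow> b \<in> B) \<and> (a \<in> B \<longrightarrow> b \<in> A)" by (rule edge_cls[OF bp]) (use dd in auto)
  have ebc: "(b \<in> A \<longrightarrow> c \<in> B) \<and> (b \<in> B \<longrightarrow> c \<in> A)" by (rule edge_cls[OF bp]) (use dd in auto)
  have ecd: "(c \<in> A \<longrightarrow> d \<in> B) \<and> (c \<in> B \<longrightarrow> d \<in> A)" by (rule edge_cls[OF bp]) (use dd in auto)
  show ?case
  proof (cases "a \<in> A")
    case True
    thus ?thesis unfolding Good_def using case_cycle[OF cycle4.hyps] eab ebc ecd by blast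
  next
    case False
    hence aB: "a \<in> B" using V by auto
    have "distinct [b,c,d,a]" using dd by auto
    from case_cycle[OF this] have "Lab {b,c,d,a} {{b,c},{c,d},{d,a},{a,b}} b d c a" .
    moreover have "{b,c,d,a} = {a,b,c,d}" "{{b,c},{c,d},{d,a},{a,b}} = {{a,b},{b,c},{c,d},{d,a}}" by auto
    ultimately have "Lab {a,b,c,d} {{a,b},{b,c},{c,d},{d,a}} b d c a" by simp
    thus ?thesis unfolding Good_def using aB eab ebc ecd by blast
  qed
next
  case (join_net V1 E1 V2 E2 u u' v v')
  note bp = join_net.prems
  define E where "E = E1 \<union> E2 \<union> {{u,v},{u',v'}}"
  have ok1: "tn_ok V1 E1" by (rule tn_struct[OF join_net.hyps(1)])
  have ok2: "tn_ok V2 E2" by (rule tn_struct[OF join_net.hyps(2)])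
  note f1 = tn_facts[OF ok1] and f2 = tn_facts[OF ok2]
  note V12 = join_net.hyps(3)
  have b: "A \<union> B = V1 \<union> V2" "A \<inter> B = {}" "\<forall>e\<in>E. card (e \<inter> A) = 1 \<and> card (e \<inter> B) = 1"
    using bip_facts[OF bp] unfolding E_def by auto
  have bipE: "\<forall>e\<in>E1 \<union> E2. card (e \<inter> A) = 1 \<and> card (e \<inter> B) = 1" using b(3) unfolding E_def by auto
  have bipE': "\<forall>e\<in>E1 \<union> E2. card (e \<inter> B) = 1 \<and> card (e \<inter> A) = 1" using bipE by auto
  have BA: "B \<inter> A = {}" using b by auto
  have r1: "bipartition V1 E1 (A \<inter> V1) (B \<inter> V1)" by (rule bip_restrict[OF bp]) (use f1 in auto)
  have r2: "bipartition V2 E2 (A \<inter> V2) (B \<inter> V2)" by (rule bip_restrict[OF bp]) (use f2 in auto)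
  obtain a1 a2 b1 b2 where T: "a1 \<in> A" "a2 \<in> A" "b1 \<in> B" "b2 \<in> B" "Lab V1 E1 a1 a2 b1 b2"
    using join_net.IH(1)[OF r1] unfolding Good_def by auto
  obtain c1 c2 d1 d2 where H: "c1 \<in> A" "c2 \<in> A" "d1 \<in> B" "d2 \<in> B" "Lab V2 E2 c1 c2 d1 d2"
    using join_net.IH(2)[OF r2] unfolding Good_def by auto
  have cT: "corners V1 E1 = {a1,a2,b1,b2}" using T(5) unfolding Lab_def by auto
  have cH: "corners V2 E2 = {c1,c2,d1,d2}" using H(5) unfolding Lab_def by auto
  have uc: "u \<in> {a1,a2,b1,b2}" "u' \<in> {a1,a2,b1,b2}" "v \<in> {c1,c2,d1,d2}" "v' \<in> {c1,c2,d1,d2}"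
    using join_net.hyps cT cH by auto
  have uV: "u \<in> V1" "u' \<in> V1" "v \<in> V2" "v' \<in> V2" using join_net.hyps unfolding corners_def by auto
  have euv: "(u \<in> A \<longrightarrow> v \<in> B) \<and> (u \<in> B \<longrightarrow> v \<in> A)"
    by (rule edge_cls[OF bp]) (use uV V12 in auto)
  have euv': "(u' \<in> A \<longrightarrow> v' \<in> B) \<and> (u' \<in> B \<longrightarrow> v' \<in> A)"
    by (rule edge_cls[OF bp]) (use uV V12 in auto)
  have uAB: "u \<in> A \<union> B" "u' \<in> A \<union> B" using uV b by auto
  have memA: "x \<in> {a1,a2}" if "x \<in> {a1,a2,b1,b2}" "x \<in> A" for x using that T b by auto
  have memB: "x \<in> {b1,b2}" if "x \<in> {a1,a2,b1,b2}" "x \<in> B" for x using that T b by auto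
  have memC: "x \<in> {c1,c2}" if "x \<in> {c1,c2,d1,d2}" "x \<in> A" for x using that H b by auto
  have memD: "x \<in> {d1,d2}" if "x \<in> {c1,c2,d1,d2}" "x \<in> B" for x using that H b by auto
  have mixed: "Good (V1 \<union> V2) (E1 \<union> E2 \<union> {{x,y},{x',y'}}) A B"
    if x: "x \<in> A" "x \<in> {a1,a2,b1,b2}" and x': "x' \<in> B" "x' \<in> {a1,a2,b1,b2}"
     and y: "y \<in> B" "y \<in> {c1,c2,d1,d2}" and y': "y' \<in> A" "y' \<in> {c1,c2,d1,d2}" for x x' y y'
  proof -
    obtain p where p: "p \<in> {a1,a2}" "Lab V1 E1 x p b1 b2" using pairA[OF T(5) memA[OF x(2,1)]] by auto
    obtain q where q: "q \<in> {b1,b2}" "Lab V1 E1 x p x' q" using pairB[OF p(2) memB[OF x'(2,1)]] by auto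
    obtain r where r: "r \<in> {c1,c2}" "Lab V2 E2 y' r d1 d2" using pairA[OF H(5) memC[OF y'(2,1)]] by auto
    obtain s where s: "s \<in> {d1,d2}" "Lab V2 E2 y' r y s" using pairB[OF r(2) memD[OF y(2,1)]] by auto
    have "Lab (V1 \<union> V2) (E1 \<union> E2 \<union> {{x,y},{x',y'}}) p r q s"
      by (rule caseII[OF bipE b(2) ok1 ok2 V12 q(2) s(2)]) (use x x' y y' p r q s T H in auto)
    thus ?thesis unfolding Good_def using p r q s T H by blast
  qed
  show ?case
  proof (cases "u \<in> A")
    case uA: True
    show ?thesis
    proof (cases "u' \<in> A")
      case u'A: True
      have LT: "Lab V1 E1 u u' b1 b2" by (rule pairA2[OF T(5) memA[OF uc(1) uA] memA[OF uc(2) u'A] join_net.hyps(6)])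
      have LH: "Lab V2 E2 c1 c2 v v'" by (rule pairB2[OF H(5) memD[OF uc(3)] memD[OF uc(4)] join_net.hyps(9)]) (use euv euv' uA u'A in auto)
      have "Lab (V1 \<union> V2) (E1 \<union> E2 \<union> {{u,v},{u',v'}}) c1 c2 b1 b2"
        by (rule caseI[OF bipE b(2) ok1 ok2 V12 LT LH]) (use T H uA u'A euv euv' in auto)
      thus ?thesis unfolding Good_def using T H by blast
    next
      case u'B: False
      hence "u' \<in> B" using uAB by auto
      thus ?thesis using mixed[OF uA uc(1) _ uc(2) _ uc(3) _ uc(4)] euv euv' uA by auto
    qed
  next
    case uB0: False
    hence uB: "u \<in> B" using uAB by auto
    show ?thesis
    proof (cases "u' \<in> A")
      case u'A: True
      have eq: "E1 \<union> E2 \<union> {{u,v},{u',v'}} = E1 \<union> E2 \<union> {{u',v'},{u,v}}" by auto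
      show ?thesis unfolding eq using mixed[OF u'A uc(2) uB uc(1) _ uc(4) _ uc(3)] euv euv' uB u'A by auto
    next
      case False
      hence u'B: "u' \<in> B" using uAB by auto
      have LT: "Lab V1 E1 u u' a1 a2"
        by (rule Lab_transp[OF pairB2[OF T(5) memB[OF uc(1) uB] memB[OF uc(2) u'B] join_net.hyps(6)]])
      have vA: "v \<in> A" "v' \<in> A" using euv euv' uB u'B by auto
      have LH: "Lab V2 E2 d1 d2 v v'"
        by (rule Lab_transp[OF pairA2[OF H(5) memC[OF uc(3) vA(1)] memC[OF uc(4) vA(2)] join_net.hyps(9)]])
      have "Lab (V1 \<union> V2) (E1 \<union> E2 \<union> {{u,v},{u',v'}}) d1 d2 a1 a2"
        by (rule caseI[OF bipE' BA ok1 ok2 V12 LT LH]) (use T H uB u'B vA in auto)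
      from Lab_transp[OF this] show ?thesis unfolding Good_def using T H by blast
    qed
  qed
next
  case (join_edge V1 E1 a b u u')
  note bp = join_edge.prems
  have ok1: "tn_ok V1 E1" by (rule tn_struct[OF join_edge.hyps(1)])
  note f1 = tn_facts[OF ok1]
  have b: "A \<union> B = V1 \<union> {a,b}" "A \<inter> B = {}" "\<forall>e\<in>E1 \<union> {{a,b}} \<union> {{u,a},{u',b}}. card (e \<inter> A) = 1 \<and> card (e \<inter> B) = 1"
    using bip_facts[OF bp] by auto
  have bip1: "\<forall>e\<in>E1. card (e \<inter> A) = 1 \<and> card (e \<inter> B) = 1" using b(3) by auto
  have r1: "bipartition V1 E1 (A \<inter> V1) (B \<inter> V1)" by (rule bip_restrict[OF bp]) (use f1 in auto)
  obtain a1 a2 b1 b2 where T: "a1 \<in> A" "a2 \<in> A" "b1 \<in> B" "b2 \<in> B" "Lab V1 E1 a1 a2 b1 b2"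
    using join_edge.IH[OF r1] unfolding Good_def by auto
  have cT: "corners V1 E1 = {a1,a2,b1,b2}" using T(5) unfolding Lab_def by auto
  have uc: "u \<in> {a1,a2,b1,b2}" "u' \<in> {a1,a2,b1,b2}" using join_edge.hyps cT by auto
  have uV: "u \<in> V1" "u' \<in> V1" using join_edge.hyps unfolding corners_def by auto
  have ab: "a \<noteq> b" "a \<notin> V1" "b \<notin> V1" using join_edge.hyps by auto
  have eab: "(a \<in> A \<longrightarrow> b \<in> B) \<and> (a \<in> B \<longrightarrow> b \<in> A)" by (rule edge_cls[OF bp]) (use ab in auto)
  have eua: "(u \<in> A \<longrightarrow> a \<in> B) \<and> (u \<in> B \<longrightarrow> a \<in> A)" by (rule edge_cls[OF bp]) (use ab uV in auto)
  have eub: "(u' \<in> A \<longrightarrow> b \<in> B) \<and> (u' \<in> B \<longrightarrow> b \<in> A)" by (rule edge_cls[OF bp]) (use ab uV in auto)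
  have uAB: "u \<in> A \<union> B" "u' \<in> A \<union> B" "a \<in> A \<union> B" "b \<in> A \<union> B" using uV b by auto
  have memA: "x \<in> {a1,a2}" if "x \<in> {a1,a2,b1,b2}" "x \<in> A" for x using that T b by auto
  have memB: "x \<in> {b1,b2}" if "x \<in> {a1,a2,b1,b2}" "x \<in> B" for x using that T b by auto
  show ?case
  proof (cases "u \<in> A")
    case uA: True
    have aB: "a \<in> B" using eua uA by auto
    have bA: "b \<in> A" using eab aB by auto
    have u'B: "u' \<in> B" using eub bA b uAB by auto
    obtain p where p: "p \<in> {a1,a2}" "Lab V1 E1 u p b1 b2" using pairA[OF T(5) memA[OF uc(1) uA]] by auto
    obtain q where q: "q \<in> {b1,b2}" "Lab V1 E1 u p u' q" using pairB[OF p(2) memB[OF uc(2) u'B]] by auto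
    have "Lab (V1 \<union> {a,b}) (E1 \<union> {{a,b}} \<union> {{u,a},{u',b}}) p b q a"
      by (rule caseE[OF bip1 b(2) ok1 ab q(2)]) (use uA u'B aB bA p q T in auto)
    thus ?thesis unfolding Good_def using p q T aB bA by blast
  next
    case False
    hence uB: "u \<in> B" using uAB by auto
    have aA: "a \<in> A" using eua uB by auto
    have bB: "b \<in> B" using eab aA b by auto
    have u'A: "u' \<in> A" using eub bB b uAB by auto
    obtain p where p: "p \<in> {a1,a2}" "Lab V1 E1 u' p b1 b2" using pairA[OF T(5) memA[OF uc(2) u'A]] by auto
    obtain q where q: "q \<in> {b1,b2}" "Lab V1 E1 u' p u q" using pairB[OF p(2) memB[OF uc(1) uB]] by auto
    have ab': "b \<noteq> a" "b \<notin> V1" "a \<notin> V1" using ab by auto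
    have "Lab (V1 \<union> {b,a}) (E1 \<union> {{b,a}} \<union> {{u',b},{u,a}}) p a q b"
      by (rule caseE[OF bip1 b(2) ok1 ab' q(2)]) (use u'A uB aA bB p q T in auto)
    moreover have "V1 \<union> {b,a} = V1 \<union> {a,b}" "E1 \<union> {{b,a}} \<union> {{u',b},{u,a}} = E1 \<union> {{a,b}} \<union> {{u,a},{u',b}}"
      by auto
    ultimately have "Lab (V1 \<union> {a,b}) (E1 \<union> {{a,b}} \<union> {{u,a},{u',b}}) p a q b" by simp
    thus ?thesis unfolding Good_def using p q T aA bB by blast
  qed
qed


theorem mainTheorem17:
  fixes V :: "'a set" and E :: "'a set set" and A B :: "'a set"
  assumes "twisted_net V E" and "bipartite V E" and "bipartition V E A B"
  shows "\<exists>u1 u2 v1 v2. u1 \<in> A \<and> u2 \<in> A \<and> u1 \<noteq> u2 \<and> v1 \<in> B \<and> v2 \<in> B \<and> v1 \<noteq> v2 \<and>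
     corners V E \<inter> A = {u1, u2} \<and> corners V E \<inter> B = {v1, v2} \<and>
     perfect_matchings (del_verts_V V {u1, u2, v1, v2}) (del_verts_E E {u1, u2, v1, v2}) \<noteq> {} \<and>
     (\<forall>u\<in>{u1, u2}. \<forall>v\<in>{v1, v2}.
        perfect_matchings (del_verts_V V {u, v}) (del_verts_E E {u, v}) \<noteq> {}) \<and>
     (\<exists>u\<in>{u1, u2}. \<exists>v\<in>{v1, v2}.
        real (card (perfect_matchings (del_verts_V V {u, v}) (del_verts_E E {u, v})))
          \<ge> 2 powr (real (card V) / 18 - 2 / 9))"
proof -
  obtain a1 a2 b1 b2 where g: "a1 \<in> A" "a2 \<in> A" "b1 \<in> B" "b2 \<in> B" and L: "Lab V E a1 a2 b1 b2"
    using main_inv[OF assms(1) assms(3)] unfolding Good_def by auto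
  have ok: "tn_ok V E" by (rule tn_struct[OF assms(1)])
  have Ev: "\<forall>e\<in>E. e \<subseteq> V" using ok unfolding tn_ok_def by auto
  have conv: "perfect_matchings (del_verts_V V S) (del_verts_E E S) = pm E (V - S)" for S
    by (rule pm_conv[OF Ev])
  have AB: "A \<inter> B = {}" using assms(3) unfolding bipartition_def by auto
  have ne: "a1 \<noteq> a2" "b1 \<noteq> b2" and corn: "corners V E = {a1,a2,b1,b2}" using L unfolding Lab_def by auto
  note N = NI_unf[OF Lab_NI[OF L]]
  have nonempty: "pm E X \<noteq> {}" if "1 \<le> int (cnt E X)" for X
    using that unfolding cnt_def by auto
  have c1: "corners V E \<inter> A = {a1,a2}" "corners V E \<inter> B = {b1,b2}" using corn g AB by auto
  have z: "perfect_matchings (del_verts_V V {a1, a2, b1, b2}) (del_verts_E E {a1, a2, b1, b2}) \<noteq> {}"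
    unfolding conv using nonempty N by auto
  have m: "\<forall>u\<in>{a1, a2}. \<forall>v\<in>{b1, b2}. perfect_matchings (del_verts_V V {u, v}) (del_verts_E E {u, v}) \<noteq> {}"
    unfolding conv using nonempty N by auto
  define m11 where "m11 = int (cnt E (V - {a1,b1}))"
  define m12 where "m12 = int (cnt E (V - {a1,b2}))"
  define m21 where "m21 = int (cnt E (V - {a2,b1}))"
  define m22 where "m22 = int (cnt E (V - {a2,b2}))"
  have eb: "2 powr (real (card V) / 18 - 2/9) \<le> real_of_int (max (max m11 m12) (max m21 m22))"
    unfolding m11_def m12_def m21_def m22_def by (rule extract_bound[OF Lab_NI[OF L]])
  have rc: "real (card (perfect_matchings (del_verts_V V {u, v}) (del_verts_E E {u, v}))) = real_of_int (int (cnt E (V - {u,v})))" for u v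
    unfolding conv cnt_def by simp
  have bound: "\<exists>u\<in>{a1, a2}. \<exists>v\<in>{b1, b2}.
        real (card (perfect_matchings (del_verts_V V {u, v}) (del_verts_E E {u, v})))
          \<ge> 2 powr (real (card V) / 18 - 2 / 9)"
  proof -
    have "max (max m11 m12) (max m21 m22) \<in> {m11, m12, m21, m22}" by (auto simp: max_def)
    then consider "max (max m11 m12) (max m21 m22) = m11" | "max (max m11 m12) (max m21 m22) = m12"
      | "max (max m11 m12) (max m21 m22) = m21" | "max (max m11 m12) (max m21 m22) = m22" by auto
    thus ?thesis
    proof cases
      case 1 thus ?thesis using eb unfolding rc m11_def by auto
    next
      case 2 thus ?thesis using eb unfolding rc m12_def by auto
    next
      case 3 thus ?thesis using eb unfolding rc m21_def by auto
    next
      case 4 thus ?thesis using eb unfolding rc m22_def by auto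
    qed
  qed
  show ?thesis
    apply (rule exI[of _ a1], rule exI[of _ a2], rule exI[of _ b1], rule exI[of _ b2])
    using g ne c1 z m bound by blast
qed


end
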